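(* Let $q$ be a prime power, $n$ a positive integer, $m$ an integer with $0\le m\le n-1$, $a\in\mathbb F_{q^{2n}}^*$ and $L(x)=ax^{q^{2m}}$. For $c\in\mathbb F_{q^2}$ let $N_c$ be the number of $u\in\mathbb F_{q^{2n}}$ with $\mathrm{Tr}(uL(u^q))+c=0$. Let $d=\gcd(2m+1,n)$, $\alpha=\big(-a^{q^{2m+1}-1}\big)^{\frac{q^{2n}-1}{q^{2d}-1}}$ and $Q=q+1-\gcd(n/d,q+1)(q^d+1)$. If $\alpha^{\frac{q+1}{\gcd(n/d,q+1)}}=1$, then \[N_c-q^{2(n-1)}=\begin{cases}(-1)^n(q-1)q^{n-2}Q&\text{if }c=0,\\(-1)^{n-1}q^{n+d-1}+(-1)^{n-1}q^{n-2}Q&\text{if }(-c^{q-1})^{n/d}=\alpha,\\(-1)^nq^{n-1}+(-1)^{n-1}q^{n-2}Q&\text{otherwise.}\end{cases}\] If $\alpha^{\frac{q+1}{\gcd(n/d,q+1)}}\ne1$, then \[N_c-q^{2(n-1)}=\begin{cases}(-1)^n(q^2-1)q^{n-2}&\text{if }c=0,\\(-1)^{n-1}q^{n-2}&\text{otherwise.}\end{cases}\] In particular, $|N_0-q^{2(n-1)}|=(q^2-1)q^{n+2m-1}$ if and only if $(2m+1)(q+1)$ divides $n$ and $\alpha=1$.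
   Context: $\mathrm{Tr}$ is the trace map $\mathbb F_{q^{2n}}\to\mathbb F_{q^2}$. *)

theory Defs
  imports Complex_Main "HOL-Computational_Algebra.Primes"
begin

definition Tr :: "nat \<Rightarrow> nat \<Rightarrow> 'a::field \<Rightarrow> 'a" where
  "Tr q n x = (\<Sum>i<n. x ^ (q ^ (2 * i)))"

definition Lmap :: "nat \<Rightarrow> nat \<Rightarrow> 'a::field \<Rightarrow> 'a \<Rightarrow> 'a" where
  "Lmap q m a x = a * x ^ (q ^ (2 * m))"

definition Ncount :: "nat \<Rightarrow> nat \<Rightarrow> nat \<Rightarrow> 'a::{finite,field} \<Rightarrow> 'a \<Rightarrow> nat" where
  "Ncount q n m a c = card {u::'a. Tr q n (u * Lmap q m a (u ^ q)) + c = 0}"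

definition dval :: "nat \<Rightarrow> nat \<Rightarrow> nat" where
  "dval m n = gcd (2 * m + 1) n"

definition alpha :: "nat \<Rightarrow> nat \<Rightarrow> nat \<Rightarrow> 'a::field \<Rightarrow> 'a" where
  "alpha q n m a = (- (a ^ (q ^ (2 * m + 1) - 1))) ^ ((q ^ (2 * n) - 1) div (q ^ (2 * dval m n) - 1))"

definition gval :: "nat \<Rightarrow> nat \<Rightarrow> nat \<Rightarrow> nat" where
  "gval q n m = gcd (n div dval m n) (q + 1)"

definition Qval :: "nat \<Rightarrow> nat \<Rightarrow> nat \<Rightarrow> real" where
  "Qval q n m = real q + 1 - real (gval q n m) * (real q ^ dval m n + 1)"

end

theory Submission
  imports Defs "HOL-Number_Theory.Number_Theory" "HOL-Algebra.Multiplicative_Group" "HOL-Computational_Algebra.Polynomial"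
begin

lemma gcd_pow_minus_one:
  fixes x :: nat assumes "x \<ge> 1"
  shows "gcd (x ^ a - 1) (x ^ b - 1) = x ^ gcd a b - 1"
proof (induction "a + b" arbitrary: a b rule: less_induct)
  case less
  show ?case
  proof (cases "a = 0 \<or> b = 0")
    case True thus ?thesis by auto
  next
    case False
    show ?thesis
    proof (cases "b \<le> a")
      case True
      have e: "x ^ a - 1 = x ^ (a - b) * (x ^ b - 1) + (x ^ (a - b) - 1)"
      proof -
        have "x ^ a = x ^ (a - b) * x ^ b" using True by (simp flip: power_add)
        moreover have "x ^ b \<ge> 1" "x ^ (a-b) \<ge> 1" using assms by auto
        ultimately show ?thesis by (simp add: algebra_simps diff_mult_distrib2)
      qed
      have "gcd (x ^ a - 1) (x ^ b - 1) = gcd (x ^ (a - b) - 1) (x ^ b - 1)"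
        unfolding e by (metis gcd.commute gcd_add_mult)
      also have "\<dots> = x ^ gcd (a - b) b - 1" using less False by simp
      also have "gcd (a - b) b = gcd a b" using True by (simp add: gcd_diff1_nat)
      finally show ?thesis .
    next
      case False2: False
      hence T: "a \<le> b" by simp
      have e: "x ^ b - 1 = x ^ (b - a) * (x ^ a - 1) + (x ^ (b - a) - 1)"
      proof -
        have "x ^ b = x ^ (b - a) * x ^ a" using T by (simp flip: power_add)
        moreover have "x ^ a \<ge> 1" "x ^ (b-a) \<ge> 1" using assms by auto
        ultimately show ?thesis by (simp add: algebra_simps diff_mult_distrib2)
      qed
      have "gcd (x ^ a - 1) (x ^ b - 1) = gcd (x ^ a - 1) (x ^ (b - a) - 1)"
        unfolding e by (metis gcd_add_mult)
      also have "\<dots> = x ^ gcd a (b - a) - 1" using less False False2 by simp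
      also have "gcd a (b - a) = gcd a b" using T by (metis gcd.commute gcd_diff1_nat)
      finally show ?thesis .
    qed
  qed
qed


lemma count_mod:
  fixes P M r :: nat
  assumes "M > 0" "M dvd P" "r < M"
  shows "card {j. j < P \<and> j mod M = r} = P div M"
proof -
  have "{j. j < P \<and> j mod M = r} = (\<lambda>i. r + M * i) ` {..<P div M}"
  proof (intro equalityI subsetI)
    fix j assume j: "j \<in> {j. j < P \<and> j mod M = r}"
    hence "j = r + M * (j div M)" using div_mult_mod_eq[of j M] by (simp add: mult.commute)
    moreover have "j div M < P div M"
      using j assms by (metis dvd_div_mult_self less_mult_imp_div_less mem_Collect_eq)
    ultimately show "j \<in> (\<lambda>i. r + M * i) ` {..<P div M}" by blast
  next
    fix j assume "j \<in> (\<lambda>i. r + M * i) ` {..<P div M}"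
    then obtain i where i: "i < P div M" "j = r + M * i" by auto
    have "r + M * i < M + M * i" using assms by simp
    also have "\<dots> = M * (i + 1)" by simp
    also have "\<dots> \<le> M * (P div M)" using i by (intro mult_le_mono2) simp
    also have "\<dots> = P" using assms by simp
    finally show "j \<in> {j. j < P \<and> j mod M = r}" using i assms by simp
  qed
  moreover have "inj_on (\<lambda>i. r + M * i) {..<P div M}" using assms by (auto simp: inj_on_def)
  ultimately show ?thesis by (simp add: card_image)
qed

lemma cong_count:
  fixes P e k :: nat
  assumes P: "P > 0"
  shows "card {j. j < P \<and> [e * j = k] (mod P)} = (if gcd e P dvd k then gcd e P else 0)"
proof (cases "gcd e P dvd k")
  case False
  have "{j. j < P \<and> [e * j = k] (mod P)} = {}"
  proof (rule ccontr)
    assume "{j. j < P \<and> [e * j = k] (mod P)} \<noteq> {}"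
    then obtain j where "[e * j = k] (mod P)" by auto
    hence "gcd e P dvd e * j \<longleftrightarrow> gcd e P dvd k"
      by (meson cong_dvd_iff gcd_dvd2 dvd_trans cong_dvd_modulus_nat)
    thus False using False by simp
  qed
  thus ?thesis using False by simp
next
  case True
  define g where "g = gcd e P"
  have g0: "g > 0" using P by (simp add: g_def)
  obtain P' where P': "P = g * P'" using g_def by (metis dvd_def gcd_dvd2)
  obtain e' where e': "e = g * e'" using g_def by (metis dvd_def gcd_dvd1)
  have P'0: "P' > 0" using P P' by simp
  have cop: "coprime e' P'"
    using g0 e' P' g_def by (metis gcd_mult_distrib_nat mult.right_neutral mult_left_cancel
        coprime_iff_gcd_eq_1 less_irrefl)
  obtain j0 where j0: "[e * j0 = k] (mod P)" using cong_solve_dvd_nat True by blast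
  have key: "[e * j = k] (mod P) \<longleftrightarrow> j mod P' = j0 mod P'" for j
  proof -
    have "[e * j = k] (mod P) \<longleftrightarrow> [e * j = e * j0] (mod P)"
      using j0 by (meson cong_sym cong_trans)
    also have "\<dots> \<longleftrightarrow> int P dvd int e * (int j - int j0)"
      by (metis cong_int_iff cong_iff_dvd_diff of_nat_mult right_diff_distrib)
    also have "\<dots> \<longleftrightarrow> int P' dvd int e' * (int j - int j0)"
      using g0 by (simp add: P' e' mult.assoc)
    also have "\<dots> \<longleftrightarrow> int P' dvd (int j - int j0)"
      using cop by (simp add: coprime_dvd_mult_right_iff coprime_commute)
    also have "\<dots> \<longleftrightarrow> [j = j0] (mod P')"
      by (metis cong_int_iff cong_iff_dvd_diff)
    also have "\<dots> \<longleftrightarrow> j mod P' = j0 mod P'" by (simp add: cong_def)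
    finally show ?thesis .
  qed
  have "card {j. j < P \<and> [e * j = k] (mod P)} = card {j. j < P \<and> j mod P' = j0 mod P'}"
    using key by simp
  also have "\<dots> = P div P'" using P'0 P' by (intro count_mod) auto
  also have "\<dots> = g" using P' P'0 by simp
  finally show ?thesis using True g_def by simp
qed


lemma field_pow_card:
  fixes x :: "'a::{finite,field}"
  shows "x ^ card (UNIV :: 'a set) = x"
proof (cases "x = 0")
  case False
  have "x * (\<Prod>y\<in>UNIV-{0}. x * y) = x * x ^ (card (UNIV :: 'a set) - 1) * \<Prod>(UNIV-{0})"
    by (simp add: prod.distrib mult_ac)
  also have "x * x ^ (card (UNIV :: 'a set) - 1) = x ^ Suc (card (UNIV :: 'a set) - 1)"
    by (subst power_Suc) auto
  also have "Suc (card (UNIV :: 'a set) - 1) = card (UNIV :: 'a set)"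
    using finite_UNIV_card_ge_0[where ?'a = 'a] by simp
  also have "(\<Prod>y\<in>UNIV-{0}. x * y) = (\<Prod>y\<in>UNIV-{0}. y)"
    by (rule prod.reindex_bij_witness[of _ "\<lambda>y. y / x" "\<lambda>y. x * y"]) (use False in auto)
  finally show ?thesis
    by simp
qed (use finite_UNIV_card_ge_0[where ?'a = 'a] in auto)

definition ring_of_ty :: "'a::field ring" where
  "ring_of_ty = \<lparr> carrier = UNIV, monoid.mult = (\<lambda>x y. x * y), one = 1, ring.zero = 0, add = (\<lambda> x y. x + y) \<rparr>"

lemma field_ring_of_ty: "field (ring_of_ty :: 'a::field ring)"
proof -
  have "\<exists>y. x + y = 0" for x :: 'a
    using add.right_inverse by blast
  moreover have "x \<noteq> 0 \<Longrightarrow> \<exists>y. x * y = 1" for x :: 'a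
    by (rule exI[of _ "inverse x"]) auto
  ultimately show ?thesis
    unfolding ring_of_ty_def using add.right_inverse
    by unfold_locales (auto simp:algebra_simps Units_def)
qed

lemma pow_ring_of_ty: "x [^]\<^bsub>(ring_of_ty :: 'a::field ring)\<^esub> (i::nat) = x ^ i"
  by (induction i) (simp_all add: ring_of_ty_def)

lemma field_has_gen:
  "\<exists>g::'a::{finite,field}. g \<noteq> 0 \<and> (\<forall>x. x \<noteq> 0 \<longrightarrow> (\<exists>i. x = g ^ i))"
proof -
  interpret field "ring_of_ty :: 'a ring" by (rule field_ring_of_ty)
  have "finite (carrier (ring_of_ty :: 'a ring))" by simp
  from finite_field_mult_group_has_gen[OF this] obtain g where
    g: "g \<in> carrier (mult_of (ring_of_ty :: 'a ring))"
    "carrier (mult_of (ring_of_ty :: 'a ring)) = {g[^]\<^bsub>(ring_of_ty :: 'a ring)\<^esub> i |i::nat. i \<in> UNIV}"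
    by blast
  have c: "carrier (mult_of (ring_of_ty :: 'a ring)) = UNIV - {0}"
    by (simp add: ring_of_ty_def)
  show ?thesis using g unfolding c pow_ring_of_ty by (intro exI[of _ g]) auto
qed

locale ffield =
  fixes q n p k :: nat and TY :: "'a::{finite,field} itself"
  assumes p_prime: "prime p" and k_pos: "k > 0" and q_def: "q = p ^ k"
    and cardF: "card (UNIV :: 'a set) = q ^ (2*n)" and n_pos: "n > 0"
begin

lemma q_ge2: "q \<ge> 2"
proof -
  have "p \<ge> 2" using p_prime prime_ge_2_nat by blast
  hence "p ^ k \<ge> p ^ 1" using k_pos by (intro power_increasing) auto
  thus ?thesis using \<open>p \<ge> 2\<close> q_def by simp
qed

lemma CHAR_eq: "CHAR('a) = p"
proof -
  have fin: "finite (UNIV :: 'a set)" by simp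
  have pc: "prime CHAR('a)" using prime_CHAR_semidom finite_imp_CHAR_pos[OF fin] by blast
  have "CHAR('a) dvd p ^ (k * (2 * n))" using CHAR_dvd_CARD[where 'a='a] cardF q_def
    by (simp add: power_mult)
  thus ?thesis using pc p_prime prime_dvd_power primes_dvd_imp_eq by blast
qed

lemma frob_add: "(x + y :: 'a) ^ (q ^ j) = x ^ (q ^ j) + y ^ (q ^ j)"
proof -
  have "q ^ j = CHAR('a) ^ (k * j)" using CHAR_eq q_def by (simp add: power_mult)
  thus ?thesis using freshmans_dream' CHAR_eq p_prime by blast
qed

lemma frob_sum: "(sum f A :: 'a) ^ (q ^ j) = (\<Sum>i\<in>A. f i ^ (q ^ j))"
proof -
  have "q ^ j = CHAR('a) ^ (k * j)" using CHAR_eq q_def by (simp add: power_mult)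
  thus ?thesis using freshmans_dream_sum' CHAR_eq p_prime by blast
qed

lemma qpow_pos: "q ^ j > 0" using q_ge2 by simp

lemma frob_zero: "(0::'a) ^ (q ^ j) = 0" using qpow_pos by simp

lemma frob_neg: "(- x :: 'a) ^ (q ^ j) = - (x ^ (q ^ j))"
proof -
  have "(x + - x) ^ (q ^ j) = 0" using frob_zero by simp
  thus ?thesis unfolding frob_add by (simp add: add_eq_0_iff)
qed

lemma frob_diff: "(x - y :: 'a) ^ (q ^ j) = x ^ (q ^ j) - y ^ (q ^ j)"
  using frob_add[of x "-y"] frob_neg[of y] by simp

lemma frob_q: "(x + y :: 'a) ^ q = x ^ q + y ^ q"
  using frob_add[of x y 1] by simp

lemma frob_q_neg: "(- x :: 'a) ^ q = - (x ^ q)"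
  using frob_neg[of x 1] by simp

lemma pow_cardF: "(x::'a) ^ (q ^ (2 * n)) = x"
  using field_pow_card[of x] cardF by simp

lemma pow_cardF_mult: "(x::'a) ^ (q ^ (2 * n * j)) = x"
proof (induction j)
  case (Suc j)
  have e: "q ^ (2 * n * Suc j) = q ^ (2 * n * j) * q ^ (2 * n)"
    by (simp add: algebra_simps flip: power_add)
  have "x ^ (q ^ (2 * n * Suc j)) = (x ^ (q ^ (2 * n * j))) ^ (q ^ (2 * n))"
    unfolding e by (rule power_mult)
  thus ?case using Suc pow_cardF by simp
qed simp

definition N where "N = q ^ (2 * n) - 1"

lemma N_pos: "N > 0"
proof -
  have "q ^ (2 * n) > q ^ 0" using q_ge2 n_pos by (intro power_strict_increasing) auto
  thus ?thesis by (simp add: N_def)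
qed

lemma pow_N: "(x::'a) \<noteq> 0 \<Longrightarrow> x ^ N = 1"
proof -
  assume x: "x \<noteq> 0"
  have "Suc N = q ^ (2 * n)" using N_pos by (simp add: N_def)
  hence "x * x ^ N = x" using pow_cardF[of x] by (metis power_Suc)
  thus ?thesis using x by simp
qed

lemma card_nonzero: "card {x::'a. x \<noteq> 0} = N"
proof -
  have "{x::'a. x \<noteq> 0} = UNIV - {0}" by auto
  thus ?thesis by (simp add: card_Diff_singleton cardF N_def)
qed

end


context
  fixes d :: "'a::field" and P :: nat
  assumes ord: "\<And>i. d ^ i = 1 \<longleftrightarrow> P dvd i" and P0: "P > 0"
begin

lemma cyc_nz: "d \<noteq> 0"
  using ord[of P] P0 by (metis dvd_refl power_0_left zero_neq_one neq0_conv)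

lemma cyc_pow_eq: "d ^ i = d ^ j \<longleftrightarrow> [i = j] (mod P)"
proof -
  have m: "d ^ i = d ^ (i mod P)" for i
  proof -
    have "d ^ i = (d ^ P) ^ (i div P) * d ^ (i mod P)"
      by (metis div_mult_mod_eq power_add power_mult mult.commute)
    thus ?thesis using ord[of P] by simp
  qed
  have A: "d ^ a = d ^ b \<Longrightarrow> a \<le> b \<Longrightarrow> b < P \<Longrightarrow> a = b" for a b
  proof -
    assume ab: "d ^ a = d ^ b" "a \<le> b" "b < P"
    have "d ^ b = d ^ a * d ^ (b - a)" using ab(2) by (simp flip: power_add)
    hence "d ^ (b - a) = 1" using ab cyc_nz by simp
    hence "P dvd b - a" using ord by simp
    moreover have "b - a < P" using ab by linarith
    ultimately have "b - a = 0" using nat_dvd_not_less by blast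
    thus "a = b" using ab by simp
  qed
  have "d ^ i = d ^ j \<longleftrightarrow> d ^ (i mod P) = d ^ (j mod P)" using m by metis
  also have "\<dots> \<longleftrightarrow> i mod P = j mod P"
    using A[of "i mod P" "j mod P"] A[of "j mod P" "i mod P"] P0
    by (metis mod_less_divisor nat_le_linear)
  finally show ?thesis by (simp add: cong_def)
qed

lemma cyc_inj: "inj_on (\<lambda>j. d ^ j) {..<P}"
  by (auto simp: inj_on_def cyc_pow_eq cong_def)

lemma cyc_pow_test: "(d ^ k) ^ (P div gcd e P) = 1 \<longleftrightarrow> gcd e P dvd k"
proof -
  define g where "g = gcd e P"
  have g0: "g > 0" using P0 by (simp add: g_def)
  obtain P' where P': "P = g * P'" using g_def by (metis dvd_def gcd_dvd2)
  have P'0: "P' > 0" using P0 P' by simp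
  have "(d ^ k) ^ (P div g) = 1 \<longleftrightarrow> P dvd k * P'"
    using P' g0 by (simp add: ord flip: power_mult)
  also have "\<dots> \<longleftrightarrow> g dvd k" using P' P'0 by (simp add: mult.commute)
  finally show ?thesis by (simp add: g_def)
qed

lemma cyc_count_exp:
  "card {j. j < P \<and> (d ^ j) ^ e = d ^ k} = (if (d ^ k) ^ (P div gcd e P) = 1 then gcd e P else 0)"
proof -
  have "{j. j < P \<and> (d ^ j) ^ e = d ^ k} = {j. j < P \<and> [e * j = k] (mod P)}"
    by (simp add: cyc_pow_eq flip: power_mult) (simp add: mult.commute)
  thus ?thesis using cong_count[OF P0, of e k] cyc_pow_test by simp
qed

lemma cyc_count:
  assumes "c \<in> (\<lambda>j. d ^ j) ` {..<P}"
  shows "card {x \<in> (\<lambda>j. d ^ j) ` {..<P}. x ^ e = c} = (if c ^ (P div gcd e P) = 1 then gcd e P else 0)"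
proof -
  obtain k where c: "c = d ^ k" using assms by auto
  have "{x \<in> (\<lambda>j. d ^ j) ` {..<P}. x ^ e = c} = (\<lambda>j. d ^ j) ` {j. j < P \<and> (d ^ j) ^ e = d ^ k}"
    using c by auto
  moreover have "inj_on (\<lambda>j. d ^ j) {j. j < P \<and> (d ^ j) ^ e = d ^ k}"
    using cyc_inj by (rule inj_on_subset) auto
  ultimately show ?thesis using cyc_count_exp c by (simp add: card_image)
qed

end

context ffield begin

definition gen :: 'a where "gen = (SOME g::'a. g \<noteq> 0 \<and> (\<forall>x. x \<noteq> 0 \<longrightarrow> (\<exists>i. x = g ^ i)))"

lemma gen_props: "gen \<noteq> 0" "\<And>x. x \<noteq> 0 \<Longrightarrow> \<exists>i. x = gen ^ i"
  using someI_ex[OF field_has_gen[where 'a='a]] unfolding gen_def by blast+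

lemma gen_ord: "gen ^ i = 1 \<longleftrightarrow> N dvd i"
proof
  assume "N dvd i" thus "gen ^ i = 1" using pow_N[OF gen_props(1)] by (auto simp: power_mult)
next
  assume g1: "gen ^ i = 1"
  define r where "r = i mod N"
  have gr: "gen ^ r = 1"
  proof -
    have "gen ^ i = (gen ^ N) ^ (i div N) * gen ^ r"
      unfolding r_def by (metis div_mult_mod_eq power_add power_mult mult.commute)
    thus ?thesis using g1 pow_N[OF gen_props(1)] by simp
  qed
  show "N dvd i"
  proof (rule ccontr)
    assume "\<not> N dvd i"
    hence r0: "r > 0" "r < N" using N_pos by (auto simp: r_def dvd_eq_mod_eq_0 gr0I)
    have "{x::'a. x \<noteq> 0} \<subseteq> (\<lambda>j. gen ^ j) ` {..<r}"
    proof
      fix x :: 'a assume "x \<in> {x. x \<noteq> 0}"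
      then obtain j where j: "x = gen ^ j" using gen_props by auto
      have "gen ^ j = (gen ^ r) ^ (j div r) * gen ^ (j mod r)"
        by (metis div_mult_mod_eq power_add power_mult mult.commute)
      hence "x = gen ^ (j mod r)" using gr j by simp
      thus "x \<in> (\<lambda>j. gen ^ j) ` {..<r}" using r0 by auto
    qed
    hence "card {x::'a. x \<noteq> 0} \<le> card ((\<lambda>j. gen ^ j) ` {..<r})" by (intro card_mono) auto
    also have "\<dots> \<le> r" using card_image_le[of "{..<r}"] by simp
    finally show False using card_nonzero r0 by simp
  qed
qed

lemma gen_image: "(\<lambda>j. gen ^ j) ` {..<N} = {x. x \<noteq> 0}"
proof -
  have "(\<lambda>j. gen ^ j) ` {..<N} \<subseteq> {x. x \<noteq> 0}" using gen_props by auto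
  moreover have "card ((\<lambda>j. gen ^ j) ` {..<N}) = N"
    using cyc_inj[of gen N] gen_ord N_pos by (simp add: card_image)
  ultimately show ?thesis using card_nonzero card_subset_eq[of "{x::'a. x \<noteq> 0}"]
    by simp
qed

lemma root_count:
  assumes "c \<noteq> 0"
  shows "card {x::'a. x \<noteq> 0 \<and> x ^ e = c} = (if c ^ (N div gcd e N) = 1 then gcd e N else 0)"
proof -
  have "{x::'a. x \<noteq> 0 \<and> x ^ e = c} = {x \<in> (\<lambda>j. gen ^ j) ` {..<N}. x ^ e = c}"
    using gen_image by auto
  thus ?thesis using cyc_count[of gen N c e] gen_ord N_pos gen_image assms by simp
qed

end

lemma poly_sum_roots_bound:
  fixes A :: "nat set" and c :: "'a::field"
  assumes "finite A" "A \<noteq> {}" "Max A > 0"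
  shows "card {x::'a. (\<Sum>i\<in>A. x ^ i) = c} \<le> Max A"
proof -
  define P :: "'a poly" where "P = (\<Sum>i\<in>A. monom 1 i) - [:c:]"
  have ev: "poly P x = (\<Sum>i\<in>A. x ^ i) - c" for x
    by (simp add: P_def poly_sum poly_monom)
  have "coeff P (Max A) = (\<Sum>i\<in>A. (if i = Max A then 1 else 0)) - (if Max A = 0 then c else 0)"
    by (simp add: P_def coeff_sum) (cases "Max A"; simp)
  also have "\<dots> = 1" using assms by (simp add: sum.delta)
  finally have cP: "coeff P (Max A) = 1" .
  hence P0: "P \<noteq> 0" by auto
  have "degree (\<Sum>i\<in>A. monom (1::'a) i) \<le> Max A"
    using assms(1) by (intro degree_sum_le) (auto intro: order.trans[OF degree_monom_le] Max_ge)
  hence dP: "degree P \<le> Max A" unfolding P_def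
    by (intro order.trans[OF degree_diff_le]) auto
  have "{x::'a. (\<Sum>i\<in>A. x ^ i) = c} = {x. poly P x = 0}" by (auto simp: ev)
  hence "card {x::'a. (\<Sum>i\<in>A. x ^ i) = c} \<le> degree P"
    using card_poly_roots_bound[OF P0] by simp
  thus ?thesis using dP by simp
qed

lemma sum_le_eq_each:
  fixes f :: "'b \<Rightarrow> nat"
  assumes "finite A" "\<And>a. a \<in> A \<Longrightarrow> f a \<le> b" "sum f A = card A * b" "a \<in> A"
  shows "f a = b"
proof (rule ccontr)
  assume "f a \<noteq> b"
  hence "f a < b" using assms by force
  hence "sum f A < sum (\<lambda>_. b) A" using assms by (intro sum_strict_mono_ex1) auto
  thus False using assms by simp
qed

context ffield begin

definition Kset :: "'a set" where "Kset = {x. x ^ (q ^ 2) = x}"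
definition Fq :: "'a set" where "Fq = {x. x ^ q = x}"
definition T :: "'a \<Rightarrow> 'a" where "T x = x + x ^ q"

lemma dvd_N: "q ^ j - 1 dvd N" if "j dvd 2 * n"
proof -
  have "gcd (q ^ j - 1) (q ^ (2 * n) - 1) = q ^ gcd j (2 * n) - 1"
    using q_ge2 by (intro gcd_pow_minus_one) auto
  also have "gcd j (2 * n) = j" using that by (simp add: gcd_nat.absorb1)
  finally show ?thesis unfolding N_def by (metis gcd_dvd2)
qed

lemma gcd_N: "gcd (q ^ j - 1) N = q ^ j - 1" if "j dvd 2 * n"
  using dvd_N[OF that] by (simp add: gcd_nat.absorb1)

lemma card_pow_fixed:
  assumes "j dvd 2 * n"
  shows "card {x::'a. x ^ (q ^ j) = x} = q ^ j"
proof -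
  have qj: "q ^ j \<ge> 1" using q_ge2 by simp
  have s: "x ^ (q ^ j) = x * x ^ (q ^ j - 1)" for x :: 'a
    using qj by (metis Suc_diff_1 power_Suc less_le_trans zero_less_one)
  have "{x::'a. x ^ (q ^ j) = x} = insert 0 {x. x \<noteq> 0 \<and> x ^ (q ^ j - 1) = 1}"
    using qpow_pos by (auto simp: s)
  moreover have "card {x::'a. x \<noteq> 0 \<and> x ^ (q ^ j - 1) = 1} = q ^ j - 1"
    using root_count[of 1 "q ^ j - 1"] gcd_N[OF assms] by simp
  ultimately show ?thesis using qj by simp
qed

lemma card_K: "card Kset = q ^ 2"
  unfolding Kset_def by (rule card_pow_fixed) simp

lemma card_Fq: "card Fq = q"
  unfolding Fq_def using card_pow_fixed[of 1] by simp

lemma Fq_sub_K: "Fq \<subseteq> Kset"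
  unfolding Fq_def Kset_def by (auto simp: power2_eq_square power_mult)

lemma K_add: "x \<in> Kset \<Longrightarrow> y \<in> Kset \<Longrightarrow> x + y \<in> Kset"
  using frob_add[of x y 2] by (simp add: Kset_def)
lemma K_mult: "x \<in> Kset \<Longrightarrow> y \<in> Kset \<Longrightarrow> x * y \<in> Kset"
  by (simp add: Kset_def power_mult_distrib)
lemma K_neg: "x \<in> Kset \<Longrightarrow> - x \<in> Kset"
  using frob_neg[of x 2] by (simp add: Kset_def)
lemma K_diff: "x \<in> Kset \<Longrightarrow> y \<in> Kset \<Longrightarrow> x - y \<in> Kset"
  using frob_diff[of x y 2] by (simp add: Kset_def)
lemma K_0: "0 \<in> Kset" using frob_zero[of 2] by (simp add: Kset_def)
lemma K_1: "1 \<in> Kset" by (simp add: Kset_def)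
lemma K_inv: "x \<in> Kset \<Longrightarrow> inverse x \<in> Kset"
  by (simp add: Kset_def power_inverse)
lemma K_div: "x \<in> Kset \<Longrightarrow> y \<in> Kset \<Longrightarrow> x / y \<in> Kset"
  by (simp add: Kset_def power_divide)
lemma K_pow: "x \<in> Kset \<Longrightarrow> x ^ j \<in> Kset"
proof -
  assume "x \<in> Kset"
  hence "(x ^ (q ^ 2)) ^ j = x ^ j" by (simp add: Kset_def)
  thus ?thesis by (simp add: Kset_def flip: power_mult) (simp add: mult.commute)
qed
lemma Fq_add: "x \<in> Fq \<Longrightarrow> y \<in> Fq \<Longrightarrow> x + y \<in> Fq"
  using frob_q[of x y] by (simp add: Fq_def)
lemma Fq_mult: "x \<in> Fq \<Longrightarrow> y \<in> Fq \<Longrightarrow> x * y \<in> Fq"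
  by (simp add: Fq_def power_mult_distrib)
lemma Fq_neg: "x \<in> Fq \<Longrightarrow> - x \<in> Fq"
  using frob_q_neg[of x] by (simp add: Fq_def)
lemma Fq_0: "0 \<in> Fq" using q_ge2 by (simp add: Fq_def)
lemma Fq_1: "1 \<in> Fq" by (simp add: Fq_def)
lemma Fq_div: "x \<in> Fq \<Longrightarrow> y \<in> Fq \<Longrightarrow> x / y \<in> Fq"
  by (simp add: Fq_def power_divide)

lemma K_pow_even: "x \<in> Kset \<Longrightarrow> x ^ (q ^ (2 * j)) = x"
proof (induction j)
  case (Suc j)
  have e: "q ^ (2 * Suc j) = q ^ 2 * q ^ (2 * j)" by (simp flip: power_add)
  have "x ^ (q ^ (2 * Suc j)) = (x ^ (q ^ 2)) ^ (q ^ (2 * j))" unfolding e by (rule power_mult)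
  thus ?case using Suc by (simp add: Kset_def)
qed simp

lemma K_pow_odd: "x \<in> Kset \<Longrightarrow> x ^ (q ^ (2 * j + 1)) = x ^ q"
proof -
  assume x: "x \<in> Kset"
  have e: "q ^ (2 * j + 1) = q ^ (2 * j) * q" by simp
  have "x ^ (q ^ (2 * j + 1)) = (x ^ (q ^ (2 * j))) ^ q" unfolding e by (rule power_mult)
  thus ?thesis using K_pow_even[OF x] by simp
qed

lemma pow_fix_iff: "(x::'a) \<noteq> 0 \<Longrightarrow> e \<ge> 1 \<Longrightarrow> x ^ e = x \<longleftrightarrow> x ^ (e - 1) = 1"
  by (metis Suc_diff_1 power_Suc less_le_trans zero_less_one mult_cancel_left1)

lemma qsq: "q ^ 2 - 1 = (q - 1) * (q + 1)"
  by (simp add: power2_eq_square algebra_simps)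

lemma norm_surj:
  assumes t: "t \<in> Fq" "t \<noteq> 0"
  shows "\<exists>y. y \<in> Kset \<and> y \<noteq> 0 \<and> y ^ (q + 1) = t"
proof -
  obtain M' where M': "N = (q ^ 2 - 1) * M'" using dvd_N[of 2] by (auto elim: dvdE)
  have NN: "N = (q + 1) * ((q - 1) * M')" using M' qsq by (simp add: ac_simps)
  hence "q + 1 dvd N" by (metis dvd_triv_left)
  hence g: "gcd (q + 1) N = q + 1" by (rule gcd_nat.absorb1)
  have tq: "t ^ (q - 1) = 1" using t pow_fix_iff[of t q] q_ge2 by (simp add: Fq_def)
  have "N div (q + 1) = (q - 1) * M'" unfolding NN by (rule nonzero_mult_div_cancel_left) simp
  hence "t ^ (N div gcd (q + 1) N) = 1" using g tq by (simp add: power_mult)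
  hence "card {x::'a. x \<noteq> 0 \<and> x ^ (q + 1) = t} = q + 1" using root_count[OF t(2), of "q+1"] g by simp
  hence "card {x::'a. x \<noteq> 0 \<and> x ^ (q + 1) = t} > 0" by simp
  hence "{x::'a. x \<noteq> 0 \<and> x ^ (q + 1) = t} \<noteq> {}" using card_gt_0_iff by blast
  then obtain y where y: "y \<noteq> 0" "y ^ (q + 1) = t" by auto
  have "y ^ (q ^ 2 - 1) = (y ^ (q + 1)) ^ (q - 1)" unfolding qsq by (metis power_mult mult.commute)
  hence "y ^ (q ^ 2 - 1) = 1" using y tq by simp
  hence "y \<in> Kset" using y pow_fix_iff[of y "q^2"] qpow_pos[of 2] by (simp add: Kset_def)
  thus ?thesis using y by blast
qed

lemma card_fibers:
  assumes "finite A" "finite B" "f ` A \<subseteq> B"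
  shows "card A = (\<Sum>b\<in>B. card {a\<in>A. f a = b})"
proof -
  have "A = (\<Union>b\<in>B. {a\<in>A. f a = b})" using assms by auto
  hence "card A = card (\<Union>b\<in>B. {a\<in>A. f a = b})" by simp
  also have "\<dots> = (\<Sum>b\<in>B. card {a\<in>A. f a = b})"
    using assms by (intro card_UN_disjoint) auto
  finally show ?thesis .
qed

lemma T_in_Fq: "x \<in> Kset \<Longrightarrow> T x \<in> Fq"
proof -
  assume x: "x \<in> Kset"
  have "(x ^ q) ^ q = x" using x by (simp add: Kset_def power2_eq_square flip: power_mult)
  thus ?thesis by (simp add: Fq_def T_def frob_q add.commute)
qed

lemma T_fiber_le: "card {x\<in>Kset. T x = t} \<le> q"
proof -
  have "{x\<in>Kset. T x = t} \<subseteq> {x::'a. (\<Sum>i\<in>{1,q}. x ^ i) = t}"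
    using q_ge2 by (auto simp: T_def)
  hence "card {x\<in>Kset. T x = t} \<le> card {x::'a. (\<Sum>i\<in>{1,q}. x ^ i) = t}"
    by (intro card_mono) auto
  also have "\<dots> \<le> Max {1, q}" using q_ge2 by (intro poly_sum_roots_bound) auto
  also have "Max {1, q} = q" using q_ge2 by simp
  finally show ?thesis .
qed

lemma T_fiber: "t \<in> Fq \<Longrightarrow> card {x\<in>Kset. T x = t} = q"
proof -
  assume t: "t \<in> Fq"
  have "card Kset = (\<Sum>b\<in>Fq. card {a\<in>Kset. T a = b})"
    using T_in_Fq by (intro card_fibers) auto
  hence "(\<Sum>b\<in>Fq. card {a\<in>Kset. T a = b}) = card Fq * q"
    using card_K card_Fq by (simp add: power2_eq_square)
  thus ?thesis using sum_le_eq_each[of Fq "\<lambda>b. card {a\<in>Kset. T a = b}" q t] T_fiber_le t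
    by simp
qed

lemma T_add: "T (x + y) = T x + T y"
  by (simp add: T_def frob_q)

lemma T_kernel_count:
  assumes "y \<in> Kset" "y \<noteq> 0"
  shows "card {l\<in>Kset. l \<noteq> 0 \<and> T (l * y) = 0} = q - 1"
proof -
  have "(\<lambda>l. l * y) ` {l\<in>Kset. T (l * y) = 0} = {x\<in>Kset. T x = 0}"
  proof (intro equalityI subsetI)
    fix x assume "x \<in> {x\<in>Kset. T x = 0}"
    thus "x \<in> (\<lambda>l. l * y) ` {l\<in>Kset. T (l * y) = 0}"
      using assms by (intro image_eqI[of _ _ "x / y"]) (auto intro: K_div)
  qed (use assms K_mult in auto)
  moreover have "inj_on (\<lambda>l. l * y) {l\<in>Kset. T (l * y) = 0}" using assms by (auto simp: inj_on_def)
  ultimately have c: "card {l\<in>Kset. T (l * y) = 0} = q"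
    using T_fiber[OF Fq_0] card_image[of "\<lambda>l. l * y" "{l\<in>Kset. T (l * y) = 0}"] by simp
  have "{l\<in>Kset. l \<noteq> 0 \<and> T (l * y) = 0} = {l\<in>Kset. T (l * y) = 0} - {0}" by auto
  moreover have "0 \<in> {l\<in>Kset. T (l * y) = 0}" using K_0 q_ge2 by (simp add: T_def)
  ultimately show ?thesis using c by (simp add: card_Diff_singleton)
qed

lemma T_nondeg:
  assumes "b \<in> Kset" "\<And>x. x \<in> Kset \<Longrightarrow> T (x * b) = 0"
  shows "b = 0"
proof (rule ccontr)
  assume b: "b \<noteq> 0"
  have "{l\<in>Kset. l \<noteq> 0 \<and> T (l * b) = 0} = Kset - {0}" using assms by auto
  hence "q - 1 = q ^ 2 - 1" using T_kernel_count[OF assms(1) b] card_K K_0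
    by (simp add: card_Diff_singleton)
  moreover have "q * 1 < q * q" using q_ge2 by (intro mult_strict_left_mono) auto
  hence "q < q ^ 2" by (simp add: power2_eq_square)
  ultimately show False using q_ge2 by linarith
qed

end

context ffield begin

abbreviation TR :: "'a \<Rightarrow> 'a" where "TR \<equiv> Tr q n"

lemma Tr_add: "TR (x + y) = TR x + TR y"
  by (simp add: Tr_def frob_add sum.distrib)

lemma Tr_neg: "TR (- x) = - TR x"
  by (simp add: Tr_def frob_neg sum_negf)

lemma Tr_diff: "TR (x - y) = TR x - TR y"
  by (simp add: Tr_def frob_diff sum_subtractf)

lemma Tr_zero: "TR 0 = 0"
  by (simp add: Tr_def frob_zero)

lemma pow_comm: "((x::'a) ^ a) ^ b = (x ^ b) ^ a" for a b :: nat
  by (simp flip: power_mult add: mult.commute)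

lemma Tr_frob_gen: "TR x ^ (q ^ m) = TR (x ^ (q ^ m))"
proof -
  have "TR x ^ (q ^ m) = (\<Sum>i<n. (x ^ (q ^ (2 * i))) ^ (q ^ m))" by (simp add: Tr_def frob_sum)
  also have "\<dots> = TR (x ^ (q ^ m))" unfolding Tr_def
    by (intro sum.cong refl) (metis power_mult mult.commute)
  finally show ?thesis .
qed

lemma Tr_in_K: "TR x \<in> Kset"
proof -
  let ?f = "\<lambda>i. x ^ (q ^ (2 * i))"
  have "TR x ^ (q ^ 2) = (\<Sum>i<n. ?f (Suc i))"
    unfolding Tr_def frob_sum by (intro sum.cong refl) (simp add: power_mult[symmetric] power_add[symmetric] mult.commute)
  also have "\<dots> = (\<Sum>i<n. ?f i)"
  proof -
    have S1: "(\<Sum>i<Suc n. ?f i) = ?f 0 + (\<Sum>i<n. ?f (Suc i))" by (rule sum.lessThan_Suc_shift)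
    have S2: "(\<Sum>i<Suc n. ?f i) = (\<Sum>i<n. ?f i) + ?f n" by (rule sum.lessThan_Suc)
    have fn: "?f n = ?f 0" using pow_cardF[of x] by simp
    show ?thesis using S1 S2 fn by (metis add.commute add_left_cancel)
  qed
  finally show ?thesis by (simp add: Kset_def Tr_def)
qed

lemma Tr_Klin: "l \<in> Kset \<Longrightarrow> TR (l * x) = l * TR x"
  by (simp add: Tr_def power_mult_distrib K_pow_even sum_distrib_left)

lemma Tr_pow_even: "TR (x ^ (q ^ (2 * j))) = TR x"
  using Tr_frob_gen[of x "2 * j"] K_pow_even[OF Tr_in_K] by simp

lemma Tr_nonzero: "\<exists>x. TR x \<noteq> 0"
proof (rule ccontr)
  assume "\<not> (\<exists>x. TR x \<noteq> 0)"
  hence all: "\<And>x. TR x = 0" by blast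
  define A where "A = (\<lambda>i. q ^ (2 * i)) ` {..<n}"
  have inj: "inj_on (\<lambda>i. q ^ (2 * i)) {..<n}" using q_ge2 by (auto simp: inj_on_def power_inject_exp)
  have TA: "TR x = (\<Sum>j\<in>A. x ^ j)" for x
    unfolding Tr_def A_def by (simp add: sum.reindex[OF inj])
  have finA: "finite A" "A \<noteq> {}" using n_pos by (auto simp: A_def)
  have MA: "Max A = q ^ (2 * (n - 1))"
  proof (rule Max_eqI)
    show "finite A" by (simp add: A_def)
    show "q ^ (2 * (n - 1)) \<in> A" using n_pos by (auto simp: A_def)
    fix y assume "y \<in> A" thus "y \<le> q ^ (2 * (n - 1))" using q_ge2 by (auto simp: A_def intro!: power_increasing)
  qed
  have "card (UNIV :: 'a set) = card {x::'a. (\<Sum>j\<in>A. x ^ j) = 0}" using all TA by simp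
  also have "\<dots> \<le> Max A" using finA MA q_ge2 by (intro poly_sum_roots_bound) auto
  also have "\<dots> < q ^ (2 * n)" unfolding MA using q_ge2 n_pos by (intro power_strict_increasing) auto
  finally show False using cardF by simp
qed

lemma Tr_nondeg: "(\<And>v. TR (w * v) = 0) \<Longrightarrow> w = 0"
proof (rule ccontr)
  assume h: "\<And>v. TR (w * v) = 0" and w: "w \<noteq> 0"
  obtain x where "TR x \<noteq> 0" using Tr_nonzero by blast
  moreover have "w * (x / w) = x" using w by simp
  ultimately show False using h[of "x / w"] by simp
qed

end

context ffield begin

definition subsp :: "'a set \<Rightarrow> bool" where
  "subsp W \<longleftrightarrow> 0 \<in> W \<and> (\<forall>u\<in>W. \<forall>v\<in>W. u + v \<in> W) \<and> (\<forall>x\<in>Kset. \<forall>u\<in>W. x * u \<in> W)"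

definition herm :: "('a \<Rightarrow> 'a \<Rightarrow> 'a) \<Rightarrow> 'a set \<Rightarrow> bool" where
  "herm B W \<longleftrightarrow> (\<forall>u\<in>W. \<forall>v\<in>W. B v u = (B u v) ^ q) \<and>
     (\<forall>u\<in>W. \<forall>v\<in>W. \<forall>w\<in>W. B u (v + w) = B u v + B u w) \<and>
     (\<forall>x\<in>Kset. \<forall>u\<in>W. \<forall>v\<in>W. B u (x * v) = x * B u v)"

definition rad :: "('a \<Rightarrow> 'a \<Rightarrow> 'a) \<Rightarrow> 'a set \<Rightarrow> 'a set" where
  "rad B W = {w\<in>W. \<forall>v\<in>W. B w v = 0}"

definition level :: "('a \<Rightarrow> 'a \<Rightarrow> 'a) \<Rightarrow> 'a set \<Rightarrow> 'a \<Rightarrow> 'a set" where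
  "level B W t = {w\<in>W. B w w = t}"

lemma herm_mono: "herm B W \<Longrightarrow> W' \<subseteq> W \<Longrightarrow> herm B W'"
  unfolding herm_def by blast

lemma subsp_neg: "subsp W \<Longrightarrow> u \<in> W \<Longrightarrow> - u \<in> W"
  unfolding subsp_def using K_neg[OF K_1] by (metis mult_minus1)

lemma subsp_diff: "subsp W \<Longrightarrow> u \<in> W \<Longrightarrow> v \<in> W \<Longrightarrow> u - v \<in> W"
  using subsp_neg[of W v] unfolding subsp_def by (metis diff_conv_add_uminus)

context
  fixes B W assumes H: "herm B W" and S: "subsp W"
begin

lemma Bsym: "u \<in> W \<Longrightarrow> v \<in> W \<Longrightarrow> B v u = (B u v) ^ q"
  using H unfolding herm_def by blast

lemma Badd: "u \<in> W \<Longrightarrow> v \<in> W \<Longrightarrow> w \<in> W \<Longrightarrow> B u (v + w) = B u v + B u w"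
  using H unfolding herm_def by blast

lemma Bsm: "x \<in> Kset \<Longrightarrow> u \<in> W \<Longrightarrow> v \<in> W \<Longrightarrow> B u (x * v) = x * B u v"
  using H unfolding herm_def by blast

lemma BK: "u \<in> W \<Longrightarrow> v \<in> W \<Longrightarrow> B u v \<in> Kset"
proof -
  assume uv: "u \<in> W" "v \<in> W"
  have "(B u v) ^ (q ^ 2) = ((B u v) ^ q) ^ q" by (simp add: power2_eq_square power_mult)
  also have "\<dots> = B u v" using Bsym[OF uv] Bsym[OF uv(2,1)] by simp
  finally show ?thesis by (simp add: Kset_def)
qed

lemma Bdiag_Fq: "u \<in> W \<Longrightarrow> B u u \<in> Fq"
  using Bsym[of u u] by (simp add: Fq_def)

lemma Badd_left: "u \<in> W \<Longrightarrow> v \<in> W \<Longrightarrow> w \<in> W \<Longrightarrow> B (u + v) w = B u w + B v w"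
proof -
  assume uvw: "u \<in> W" "v \<in> W" "w \<in> W"
  have uv: "u + v \<in> W" using S uvw unfolding subsp_def by blast
  have "B (u + v) w = (B w (u + v)) ^ q" using Bsym[OF uvw(3) uv] by simp
  also have "\<dots> = (B w u) ^ q + (B w v) ^ q" using Badd[OF uvw(3,1,2)] frob_q by simp
  also have "\<dots> = B u w + B v w" using Bsym[OF uvw(3,1)] Bsym[OF uvw(3,2)] by simp
  finally show ?thesis .
qed

lemma Bsm_left: "x \<in> Kset \<Longrightarrow> u \<in> W \<Longrightarrow> v \<in> W \<Longrightarrow> B (x * u) v = x ^ q * B u v"
proof -
  assume xuv: "x \<in> Kset" "u \<in> W" "v \<in> W"
  have xu: "x * u \<in> W" using S xuv unfolding subsp_def by blast
  have "B (x * u) v = (B v (x * u)) ^ q" using Bsym[OF xuv(3) xu] by simp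
  also have "\<dots> = x ^ q * (B v u) ^ q" using Bsm[OF xuv(1,3,2)] by (simp add: power_mult_distrib)
  also have "\<dots> = x ^ q * B u v" using Bsym[OF xuv(3,2)] by simp
  finally show ?thesis .
qed

lemma B_scale_diag: "y \<in> Kset \<Longrightarrow> u \<in> W \<Longrightarrow> B (y * u) (y * u) = y ^ (q + 1) * B u u"
proof -
  assume yu: "y \<in> Kset" "u \<in> W"
  have yu': "y * u \<in> W" using S yu unfolding subsp_def by blast
  have "B (y * u) (y * u) = y ^ q * B u (y * u)" using Bsm_left[OF yu yu'] .
  also have "\<dots> = y ^ q * (y * B u u)" using Bsm[OF yu(1) yu(2) yu(2)] by simp
  finally show ?thesis by (simp add: algebra_simps)
qed

lemma finW: "finite W" by simp

lemma level_eq: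
  assumes t: "t \<in> Fq" "t \<noteq> 0" and t': "t' \<in> Fq" "t' \<noteq> 0"
  shows "card (level B W t) = card (level B W t')"
proof -
  obtain y where y: "y \<in> Kset" "y \<noteq> 0" "y ^ (q + 1) = t' / t"
    using norm_surj[of "t' / t"] t t' Fq_div by auto
  have iy: "inverse y \<in> Kset" using y K_inv by blast
  have "(\<lambda>w. y * w) ` level B W t = level B W t'"
  proof (intro equalityI subsetI)
    fix z assume "z \<in> (\<lambda>w. y * w) ` level B W t"
    then obtain w where w: "w \<in> W" "B w w = t" "z = y * w" by (auto simp: level_def)
    have "z \<in> W" using S w y unfolding subsp_def by blast
    moreover have "B z z = t'" using B_scale_diag[OF y(1) w(1)] w y t by simp
    ultimately show "z \<in> level B W t'" by (simp add: level_def)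
  next
    fix z assume "z \<in> level B W t'"
    hence z: "z \<in> W" "B z z = t'" by (auto simp: level_def)
    have w: "inverse y * z \<in> W" using S z iy unfolding subsp_def by blast
    have "B (inverse y * z) (inverse y * z) = inverse (y ^ (q + 1)) * t'"
      using B_scale_diag[OF iy z(1)] z by (simp add: power_inverse)
    also have "\<dots> = t" using y t t' by simp
    finally have "inverse y * z \<in> level B W t" using w by (simp add: level_def)
    moreover have "z = y * (inverse y * z)" using y by simp
    ultimately show "z \<in> (\<lambda>w. y * w) ` level B W t" by blast
  qed
  moreover have "inj_on (\<lambda>w. y * w) (level B W t)" using y by (auto simp: inj_on_def)
  ultimately show ?thesis using card_image[of "\<lambda>w. y * w" "level B W t"] by simp
qed

lemma level_sum:
  assumes t: "t \<in> Fq" "t \<noteq> 0"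
  shows "card W = card (level B W 0) + (q - 1) * card (level B W t)"
proof -
  have "card W = (\<Sum>s\<in>Fq. card {w\<in>W. B w w = s})"
    using Bdiag_Fq by (intro card_fibers) auto
  also have "\<dots> = (\<Sum>s\<in>Fq. card (level B W s))" by (simp add: level_def)
  also have "\<dots> = card (level B W 0) + (\<Sum>s\<in>Fq - {0}. card (level B W s))"
    using Fq_0 by (simp add: sum.remove)
  also have "(\<Sum>s\<in>Fq - {0}. card (level B W s)) = (\<Sum>s\<in>Fq - {0}. card (level B W t))"
    using level_eq[OF _ _ t] by (intro sum.cong refl) auto
  also have "\<dots> = (q - 1) * card (level B W t)" using card_Fq Fq_0 by (simp add: card_Diff_singleton)
  finally show ?thesis .
qed

end

end

context ffield begin

lemma Bzero: "herm B W \<Longrightarrow> subsp W \<Longrightarrow> u \<in> W \<Longrightarrow> B u 0 = 0"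
  using Bsm[of B W 0 u u] K_0 by simp

lemma Bdiff: "herm B W \<Longrightarrow> subsp W \<Longrightarrow> u \<in> W \<Longrightarrow> a \<in> W \<Longrightarrow> b \<in> W \<Longrightarrow> B u (a - b) = B u a - B u b"
proof -
  assume H: "herm B W" and S: "subsp W" and m: "u \<in> W" "a \<in> W" "b \<in> W"
  have nb: "- b \<in> W" using subsp_neg[OF S m(3)] .
  have "B u (a - b) = B u a + B u (- b)" using Badd[OF H S m(1,2) nb] by simp
  also have "B u (- b) = - B u b" using Bsm[OF H S K_neg[OF K_1] m(1,3)] by simp
  finally show ?thesis by simp
qed

lemma norm_in_Fq: "x \<in> Kset \<Longrightarrow> x ^ (q + 1) \<in> Fq"
proof -
  assume x: "x \<in> Kset"
  have "(x ^ (q + 1)) ^ q = (x ^ q) ^ q * x ^ q" by (simp add: power_mult_distrib power_add)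
  also have "(x ^ q) ^ q = x" using x by (simp add: Kset_def power2_eq_square flip: power_mult)
  finally show ?thesis by (simp add: Fq_def mult.commute)
qed

lemma herm_count:
  assumes "subsp W" "herm B W"
  shows "\<exists>r. card W = card (rad B W) * q ^ (2 * r) \<and>
    int q * int (card (level B W 0)) = int (card W) + (-1) ^ r * (int q - 1) * int q ^ r * int (card (rad B W))"
  using assms
proof (induction "card W" arbitrary: W rule: less_induct)
  case less
  note S = less.prems(1) and H = less.prems(2)
  show ?case
  proof (cases "\<exists>v\<in>W. B v v \<noteq> 0")
    case False
    have all0: "B u w = 0" if uw: "u \<in> W" "w \<in> W" for u w
    proof -
      define b where "b = B u w"
      have bK: "b \<in> Kset" using BK[OF H S uw] by (simp add: b_def)
      have "T (x * b) = 0" if x: "x \<in> Kset" for x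
      proof -
        have xw: "x * w \<in> W" using S x uw unfolding subsp_def by blast
        have z: "u + x * w \<in> W" using S xw uw unfolding subsp_def by blast
        have "B (u + x * w) (u + x * w) = B u (u + x * w) + B (x * w) (u + x * w)"
          using Badd_left[OF H S uw(1) xw z] .
        also have "\<dots> = B u u + B u (x * w) + (B (x * w) u + B (x * w) (x * w))"
          using Badd[OF H S uw(1) uw(1) xw] Badd[OF H S xw uw(1) xw] by simp
        also have "B u (x * w) = x * b" using Bsm[OF H S x uw] by (simp add: b_def)
        also have "B (x * w) u = x ^ q * B w u" using Bsm_left[OF H S x uw(2) uw(1)] .
        also have "B w u = b ^ q" using Bsym[OF H S uw] by (simp add: b_def)
        also have "B (x * w) (x * w) = x ^ (q + 1) * B w w" using B_scale_diag[OF H S x uw(2)] .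
        finally have "B (u + x * w) (u + x * w) = B u u + x * b + (x ^ q * b ^ q + x ^ (q + 1) * B w w)" .
        moreover have "B (u + x * w) (u + x * w) = 0" "B u u = 0" "B w w = 0" using False z uw by auto
        ultimately show ?thesis by (simp add: T_def power_mult_distrib)
      qed
      thus ?thesis using T_nondeg[OF bK] by (simp add: b_def)
    qed
    have "rad B W = W" using all0 by (auto simp: rad_def)
    moreover have "level B W 0 = W" using False by (auto simp: level_def)
    ultimately show ?thesis
      by (intro exI[of _ 0]) (simp add: algebra_simps)
  next
    case True
    then obtain v where v: "v \<in> W" "B v v \<noteq> 0" by blast
    define h where "h = B v v"
    have hK: "h \<in> Kset" using BK[OF H S v(1) v(1)] by (simp add: h_def)
    have hF: "h \<in> Fq" using Bdiag_Fq[OF H S v(1)] by (simp add: h_def)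
    have h0: "h \<noteq> 0" using v by (simp add: h_def)
    define W' where "W' = {w\<in>W. B v w = 0}"
    have W'W: "W' \<subseteq> W" by (auto simp: W'_def)
    have S': "subsp W'"
      unfolding subsp_def W'_def
    proof (intro conjI ballI)
      show "0 \<in> {w \<in> W. B v w = 0}" using S Bzero[OF H S v(1)] by (simp add: subsp_def)
    next
      fix a b assume "a \<in> {w \<in> W. B v w = 0}" "b \<in> {w \<in> W. B v w = 0}"
      thus "a + b \<in> {w \<in> W. B v w = 0}" using S Badd[OF H S v(1)] by (auto simp: subsp_def)
    next
      fix x a assume "x \<in> Kset" "a \<in> {w \<in> W. B v w = 0}"
      thus "x * a \<in> {w \<in> W. B v w = 0}" using S Bsm[OF H S _ v(1)] by (auto simp: subsp_def)
    qed
    have H': "herm B W'" using herm_mono[OF H W'W] .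
    have "v \<notin> W'" using v by (simp add: W'_def)
    hence "W' \<subset> W" using W'W v by blast
    hence lt: "card W' < card W" by (intro psubset_card_mono) auto
    obtain r where r: "card W' = card (rad B W') * q ^ (2 * r)"
      "int q * int (card (level B W' 0)) = int (card W') + (-1) ^ r * (int q - 1) * int q ^ r * int (card (rad B W'))"
      using less.hyps[OF lt S' H'] by blast
    have radeq: "rad B W' = rad B W"
    proof (intro equalityI subsetI)
      fix w assume "w \<in> rad B W'"
      hence w: "w \<in> W" "B v w = 0" "\<And>z. z \<in> W' \<Longrightarrow> B w z = 0" by (auto simp: rad_def W'_def)
      have "B w u = 0" if u: "u \<in> W" for u
      proof -
        define x where "x = B v u / h"
        have xK: "x \<in> Kset" using BK[OF H S v(1) u] hK K_div by (simp add: x_def)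
        have xv: "x * v \<in> W" using S xK v unfolding subsp_def by blast
        have "B v (u - x * v) = B v u - x * h" using Bdiff[OF H S v(1) u xv] Bsm[OF H S xK v(1) v(1)]
          by (simp add: h_def)
        also have "\<dots> = 0" using h0 by (simp add: x_def)
        finally have "u - x * v \<in> W'" using subsp_diff[OF S u xv] by (simp add: W'_def)
        hence "B w (u - x * v) = 0" using w by blast
        moreover have "B w (x * v) = 0" using Bsm[OF H S xK w(1) v(1)] Bsym[OF H S v(1) w(1)] w(2)
          frob_zero[of 1] by simp
        ultimately show "B w u = 0" using Bdiff[OF H S w(1) u xv] by simp
      qed
      thus "w \<in> rad B W" using w by (simp add: rad_def)
    next
      fix w assume "w \<in> rad B W"
      hence w: "w \<in> W" "\<And>z. z \<in> W \<Longrightarrow> B w z = 0" by (auto simp: rad_def)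
      have "B v w = 0" using Bsym[OF H S w(1) v(1)] w(2)[OF v(1)] frob_zero[of 1] by simp
      thus "w \<in> rad B W'" using w W'W by (auto simp: rad_def W'_def)
    qed
    define phi where "phi = (\<lambda>(x, w). x * v + w)"
    have phi_in: "phi (x, w) \<in> W" if "x \<in> Kset" "w \<in> W'" for x w
      using S that v W'W unfolding subsp_def phi_def by auto
    have Bv_phi: "B v (phi (x, w)) = x * h" if "x \<in> Kset" "w \<in> W'" for x w
    proof -
      have xv: "x * v \<in> W" using S that v unfolding subsp_def by blast
      have "B v (phi (x, w)) = B v (x * v) + B v w" using Badd[OF H S v(1) xv] that W'W by (auto simp: phi_def)
      thus ?thesis using Bsm[OF H S that(1) v(1) v(1)] that by (simp add: h_def W'_def)
    qed
    have inj: "inj_on phi (Kset \<times> W')"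
    proof (rule inj_onI)
      fix a b assume a: "a \<in> Kset \<times> W'" and b: "b \<in> Kset \<times> W'" and e: "phi a = phi b"
      obtain x w where a': "a = (x, w)" by (cases a)
      obtain x' w' where b': "b = (x', w')" by (cases b)
      have "x * h = x' * h" using Bv_phi[of x w] Bv_phi[of x' w'] a b e a' b' by auto
      hence "x = x'" using h0 by simp
      thus "a = b" using e a' b' by (simp add: phi_def)
    qed
    have img: "phi ` (Kset \<times> W') = W"
    proof (intro equalityI subsetI)
      fix z assume "z \<in> phi ` (Kset \<times> W')" thus "z \<in> W" using phi_in by auto
    next
      fix u assume u: "u \<in> W"
      define x where "x = B v u / h"
      have xK: "x \<in> Kset" using BK[OF H S v(1) u] hK K_div by (simp add: x_def)
      have xv: "x * v \<in> W" using S xK v unfolding subsp_def by blast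
      have "B v (u - x * v) = B v u - x * h" using Bdiff[OF H S v(1) u xv] Bsm[OF H S xK v(1) v(1)]
        by (simp add: h_def)
      also have "\<dots> = 0" using h0 by (simp add: x_def)
      finally have "u - x * v \<in> W'" using subsp_diff[OF S u xv] by (simp add: W'_def)
      moreover have "u = phi (x, u - x * v)" by (simp add: phi_def)
      ultimately show "u \<in> phi ` (Kset \<times> W')" using xK by blast
    qed
    have cardW: "card W = q ^ 2 * card W'"
      using card_image[OF inj] img card_K by (simp add: card_cartesian_product)
    have diag: "B (phi (x, w)) (phi (x, w)) = x ^ (q + 1) * h + B w w" if xw: "x \<in> Kset" "w \<in> W'" for x w
    proof -
      have w: "w \<in> W" "B v w = 0" using xw by (auto simp: W'_def)
      have xv: "x * v \<in> W" using S xw v unfolding subsp_def by blast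
      have "B (x * v + w) (x * v + w) = B (x * v) (x * v + w) + B w (x * v + w)"
        using Badd_left[OF H S xv w(1)] phi_in[OF xw] by (simp add: phi_def)
      also have "\<dots> = B (x * v) (x * v) + B (x * v) w + (B w (x * v) + B w w)"
        using Badd[OF H S xv xv w(1)] Badd[OF H S w(1) xv w(1)] by simp
      also have "B (x * v) (x * v) = x ^ (q + 1) * h" using B_scale_diag[OF H S xw(1) v(1)] by (simp add: h_def)
      also have "B (x * v) w = 0" using Bsm_left[OF H S xw(1) v(1) w(1)] w by simp
      also have "B w (x * v) = 0" using Bsm[OF H S xw(1) w(1) v(1)] Bsym[OF H S v(1) w(1)] w frob_zero[of 1]
        by simp
      finally show ?thesis by (simp add: phi_def)
    qed
    have lev: "level B W 0 = phi ` (SIGMA x:Kset. level B W' (- (x ^ (q + 1) * h)))"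
    proof (intro equalityI subsetI)
      fix u assume "u \<in> level B W 0"
      hence u: "u \<in> W" "B u u = 0" by (auto simp: level_def)
      have "u \<in> phi ` (Kset \<times> W')" using img u by simp
      then obtain pr where pr: "pr \<in> Kset \<times> W'" "u = phi pr" by blast
      obtain x w where "pr = (x, w)" by (cases pr)
      hence xw: "x \<in> Kset" "w \<in> W'" "u = phi (x, w)" using pr by auto
      have "x ^ (q + 1) * h + B w w = 0" using diag[OF xw(1,2)] u xw(3) by simp
      hence "B w w = - (x ^ (q + 1) * h)" by (metis add_eq_0_iff)
      hence "w \<in> level B W' (- (x ^ (q + 1) * h))" using xw W'W by (auto simp: level_def)
      thus "u \<in> phi ` (SIGMA x:Kset. level B W' (- (x ^ (q + 1) * h)))" using xw by blast
    next
      fix u assume "u \<in> phi ` (SIGMA x:Kset. level B W' (- (x ^ (q + 1) * h)))"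
      then obtain x w where xw: "x \<in> Kset" "w \<in> level B W' (- (x ^ (q + 1) * h))" "u = phi (x, w)" by blast
      have w: "w \<in> W'" "B w w = - (x ^ (q + 1) * h)" using xw by (auto simp: level_def)
      have "B u u = 0" using diag[OF xw(1) w(1)] w xw by simp
      thus "u \<in> level B W 0" using phi_in[OF xw(1) w(1)] xw by (simp add: level_def)
    qed
    have inj2: "inj_on phi (SIGMA x:Kset. level B W' (- (x ^ (q + 1) * h)))"
      by (rule inj_on_subset[OF inj]) (auto simp: level_def)
    define E where "E = card (level B W' (- h))"
    have mhF: "- h \<in> Fq" "- h \<noteq> 0" using hF h0 Fq_neg by auto
    have levx: "card (level B W' (- (x ^ (q + 1) * h))) = E" if x: "x \<in> Kset - {0}" for x
    proof -
      have "x ^ (q + 1) * h \<in> Fq" using norm_in_Fq[of x] x hF Fq_mult by auto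
      hence "- (x ^ (q + 1) * h) \<in> Fq" using Fq_neg by blast
      moreover have "- (x ^ (q + 1) * h) \<noteq> 0" using x h0 by simp
      ultimately show ?thesis unfolding E_def using level_eq[OF H' S' _ _ mhF] by blast
    qed
    have cardlev: "card (level B W 0) = card (level B W' 0) + (q ^ 2 - 1) * E"
    proof -
      have "card (level B W 0) = card (SIGMA x:Kset. level B W' (- (x ^ (q + 1) * h)))"
        unfolding lev using card_image[OF inj2] .
      also have "\<dots> = (\<Sum>x\<in>Kset. card (level B W' (- (x ^ (q + 1) * h))))"
        by (rule card_SigmaI) auto
      also have "\<dots> = card (level B W' (- (0 ^ (q + 1) * h))) + (\<Sum>x\<in>Kset - {0}. card (level B W' (- (x ^ (q + 1) * h))))"
        using K_0 by (simp add: sum.remove)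
      also have "(\<Sum>x\<in>Kset - {0}. card (level B W' (- (x ^ (q + 1) * h)))) = (\<Sum>x\<in>Kset - {0}. E)"
        using levx by (intro sum.cong refl)
      also have "\<dots> = (q ^ 2 - 1) * E" using card_K K_0 by (simp add: card_Diff_singleton)
      finally show ?thesis by simp
    qed
    have lsum: "card W' = card (level B W' 0) + (q - 1) * E"
      unfolding E_def using level_sum[OF H' S' mhF] .
    show ?thesis
    proof (intro exI[of _ "Suc r"] conjI)
      show "card W = card (rad B W) * q ^ (2 * Suc r)"
      proof -
        have e: "q ^ (2 * Suc r) = q ^ 2 * q ^ (2 * r)" by (simp flip: power_add)
        have "card W = q ^ 2 * (card (rad B W) * q ^ (2 * r))" using cardW r(1) radeq by simp
        thus ?thesis unfolding e by (metis mult.left_commute)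
      qed
      define Z' where "Z' = int (card (level B W' 0))"
      define Wc where "Wc = int (card W')"
      define R where "R = int (card (rad B W))"
      define Q where "Q = int q"
      have i1: "int (card W) = Q ^ 2 * Wc" using cardW by (simp add: Q_def Wc_def)
      have q1: "int (q - 1) = Q - 1" "int (q ^ 2 - 1) = Q ^ 2 - 1" using q_ge2
        by (auto simp: Q_def of_nat_diff)
      have i2: "int (card (level B W 0)) = Z' + (Q ^ 2 - 1) * int E" using cardlev q1 by (simp add: Z'_def)
      have i3: "Wc = Z' + (Q - 1) * int E" using lsum q1 by (simp add: Z'_def Wc_def)
      have i4: "Q * Z' = Wc + (-1) ^ r * (Q - 1) * Q ^ r * R"
        using r(2) radeq by (simp add: Q_def Z'_def Wc_def R_def)
      have "Q * int (card (level B W 0)) = Q * Z' + Q * (Q + 1) * ((Q - 1) * int E)"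
        unfolding i2 by (simp add: algebra_simps power2_eq_square)
      also have "(Q - 1) * int E = Wc - Z'" using i3 by simp
      also have "Q * Z' + Q * (Q + 1) * (Wc - Z') = Q * (Q + 1) * Wc - Q * (Q * Z')"
        by (simp add: algebra_simps)
      also have "\<dots> = Q ^ 2 * Wc + (-1) ^ Suc r * (Q - 1) * Q ^ Suc r * R"
        unfolding i4 by (simp add: algebra_simps power2_eq_square)
      finally show "int q * int (card (level B W 0)) = int (card W) + (-1) ^ Suc r * (int q - 1) * int q ^ Suc r * int (card (rad B W))"
        using i1 by (simp add: Q_def R_def)
    qed
  qed
qed

end

lemma lin_solve: "(B1::'a::field) \<noteq> 0 \<Longrightarrow> B1 * X + b = 0 \<longleftrightarrow> X = - (b / B1)"
proof -
  assume B: "B1 \<noteq> 0"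
  have "B1 * X + b = 0 \<longleftrightarrow> B1 * X = - b" by (simp add: eq_neg_iff_add_eq_0)
  also have "\<dots> \<longleftrightarrow> X = - (b / B1)" using B by (auto simp: field_simps)
  finally show ?thesis .
qed

locale spec = ffield q n p k TY for q n p k and TY :: "'a::{finite,field} itself" +
  fixes a :: 'a and m :: nat
  assumes a_nz: "a \<noteq> 0" and m_le: "m \<le> n - 1"
begin

definition s where "s = 2 * m + 1"
definition H :: "'a \<Rightarrow> 'a \<Rightarrow> 'a" where "H u v = TR (a * u ^ (q ^ s) * v)"
definition Bl :: "'a \<Rightarrow> 'a \<Rightarrow> 'a \<Rightarrow> 'a" where "Bl l u v = l * H u v + (l * H v u) ^ q"
definition f :: "'a \<Rightarrow> 'a" where "f u = TR (u * Lmap q m a (u ^ q))"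

lemma f_H: "f u = H u u"
proof -
  have "(u ^ q) ^ (q ^ (2 * m)) = u ^ (q ^ s)"
    by (simp add: s_def flip: power_mult)
  thus ?thesis by (simp add: f_def H_def Lmap_def mult_ac)
qed

lemma H_K: "H u v \<in> Kset" by (simp add: H_def Tr_in_K)

lemma H_add1: "H (u + w) v = H u v + H w v"
  by (simp add: H_def frob_add distrib_left distrib_right Tr_add)

lemma H_add2: "H u (v + w) = H u v + H u w"
  by (simp add: H_def distrib_left Tr_add)

lemma H_sm2: "x \<in> Kset \<Longrightarrow> H u (x * v) = x * H u v"
proof -
  assume x: "x \<in> Kset"
  have "H u (x * v) = TR (x * (a * u ^ (q ^ s) * v))" by (simp add: H_def mult_ac)
  thus ?thesis using Tr_Klin[OF x] by (simp add: H_def)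
qed

lemma H_sm1: "x \<in> Kset \<Longrightarrow> H (x * v) u = x ^ q * H v u"
proof -
  assume x: "x \<in> Kset"
  have xs: "x ^ (q ^ s) = x ^ q" using K_pow_odd[OF x, of m] by (simp add: s_def)
  have "H (x * v) u = TR (x ^ q * (a * v ^ (q ^ s) * u))" by (simp add: H_def power_mult_distrib xs mult_ac)
  thus ?thesis using Tr_Klin[OF K_pow[OF x]] by (simp add: H_def)
qed

lemma subsp_UNIV: "subsp UNIV" by (simp add: subsp_def)

lemma herm_Bl: "l \<in> Kset \<Longrightarrow> herm (Bl l) UNIV"
  unfolding herm_def
proof (intro conjI ballI)
  fix u v assume l: "l \<in> Kset"
  have lK: "l * H v u \<in> Kset" using K_mult[OF l H_K] .
  have "(Bl l u v) ^ q = (l * H u v) ^ q + ((l * H v u) ^ q) ^ q" by (simp add: Bl_def frob_q)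
  also have "((l * H v u) ^ q) ^ q = l * H v u" using lK by (simp add: Kset_def power2_eq_square flip: power_mult)
  finally show "Bl l v u = (Bl l u v) ^ q" by (simp add: Bl_def add.commute)
next
  fix u v w
  show "Bl l u (v + w) = Bl l u v + Bl l u w"
    by (simp add: Bl_def H_add1 H_add2 distrib_left frob_q)
next
  fix x u v assume l: "l \<in> Kset" and x: "x \<in> Kset"
  have "(l * H (x * v) u) ^ q = (l * (x ^ q * H v u)) ^ q" by (simp only: H_sm1[OF x])
  also have "\<dots> = (x ^ q) ^ q * (l * H v u) ^ q" by (simp add: power_mult_distrib mult_ac)
  also have "(x ^ q) ^ q = x" using x by (simp add: Kset_def power2_eq_square flip: power_mult)
  finally have C: "(l * H (x * v) u) ^ q = x * (l * H v u) ^ q" .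
  have "Bl l u (x * v) = l * (x * H u v) + (l * H (x * v) u) ^ q" by (simp only: Bl_def H_sm2[OF x])
  also have "\<dots> = l * (x * H u v) + x * (l * H v u) ^ q" by (simp only: C)
  finally show "Bl l u (x * v) = x * Bl l u v" by (simp add: Bl_def algebra_simps)
qed

lemma Bl_diag: "Bl l u u = T (l * f u)"
  by (simp add: Bl_def T_def f_H)

lemma s_le: "s < 2 * n" using m_le n_pos by (simp add: s_def)

lemma e1e2: "q ^ s * q ^ (2 * n - s) = q ^ (2 * n)"
  using s_le by (simp flip: power_add)

lemma Bl_Tr:
  assumes l: "l \<in> Kset"
  shows "Bl l u v = TR (((l * a) * u ^ (q ^ s) + ((l * a) * u) ^ (q ^ (2 * n - s))) * v)"
proof -
  define b where "b = l * a"
  have 1: "l * H u v = TR (b * u ^ (q ^ s) * v)"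
    using Tr_Klin[OF l, of "a * u ^ (q ^ s) * v"] by (simp add: H_def b_def mult_ac)
  have "l * H v u = TR (b * v ^ (q ^ s) * u)"
    using Tr_Klin[OF l, of "a * v ^ (q ^ s) * u"] by (simp add: H_def b_def mult_ac)
  hence "(l * H v u) ^ q = TR ((b * v ^ (q ^ s) * u) ^ q)" using Tr_frob_gen[of _ 1] by simp
  also have "\<dots> = TR (((b * v ^ (q ^ s) * u) ^ q) ^ (q ^ (2 * (n - m - 1))))" by (rule Tr_pow_even[symmetric])
  also have "((b * v ^ (q ^ s) * u) ^ q) ^ (q ^ (2 * (n - m - 1))) = (b * v ^ (q ^ s) * u) ^ (q ^ (2 * n - s))"
  proof -
    have ee: "Suc (2 * (n - m - 1)) = 2 * n - s" using m_le n_pos by (simp add: s_def)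
    have "q * q ^ (2 * (n - m - 1)) = q ^ (2 * n - s)" unfolding ee[symmetric] by simp
    thus ?thesis by (simp flip: power_mult)
  qed
  also have "\<dots> = (b * u) ^ (q ^ (2 * n - s)) * v"
  proof -
    have "(v ^ (q ^ s)) ^ (q ^ (2 * n - s)) = v" using e1e2 pow_cardF[of v] by (simp flip: power_mult)
    thus ?thesis by (simp add: power_mult_distrib mult_ac)
  qed
  finally show ?thesis using 1 by (simp add: Bl_def Tr_add[symmetric] distrib_right b_def)
qed

lemma rad_Bl:
  assumes l: "l \<in> Kset"
  shows "rad (Bl l) UNIV = {u. (l * a) ^ (q ^ s) * u ^ (q ^ (2 * s)) + (l * a) * u = 0}"
proof -
  define b where "b = l * a"
  have "u \<in> rad (Bl l) UNIV \<longleftrightarrow> b * u ^ (q ^ s) + (b * u) ^ (q ^ (2 * n - s)) = 0" for u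
  proof -
    have "u \<in> rad (Bl l) UNIV \<longleftrightarrow> (\<forall>v. TR ((b * u ^ (q ^ s) + (b * u) ^ (q ^ (2 * n - s))) * v) = 0)"
      by (simp add: rad_def Bl_Tr[OF l] b_def)
    also have "\<dots> \<longleftrightarrow> b * u ^ (q ^ s) + (b * u) ^ (q ^ (2 * n - s)) = 0"
      using Tr_nondeg Tr_zero by auto
    finally show ?thesis .
  qed
  moreover have "(b * u ^ (q ^ s) + (b * u) ^ (q ^ (2 * n - s))) ^ (q ^ s) = b ^ (q ^ s) * u ^ (q ^ (2 * s)) + b * u" for u
  proof -
    have "(b * u ^ (q ^ s) + (b * u) ^ (q ^ (2 * n - s))) ^ (q ^ s) = (b * u ^ (q ^ s)) ^ (q ^ s) + ((b * u) ^ (q ^ (2 * n - s))) ^ (q ^ s)"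
      by (rule frob_add)
    also have "((b * u) ^ (q ^ (2 * n - s))) ^ (q ^ s) = b * u"
      using pow_cardF[of "b * u"] e1e2 by (simp flip: power_mult add: mult.commute)
    also have "(b * u ^ (q ^ s)) ^ (q ^ s) = b ^ (q ^ s) * u ^ (q ^ (2 * s))"
      by (simp add: power_mult_distrib mult_2 power_add flip: power_mult)
    finally show ?thesis .
  qed
  moreover have "(w::'a) = 0 \<longleftrightarrow> w ^ (q ^ s) = 0" for w using qpow_pos[of s] by simp
  ultimately have "u \<in> rad (Bl l) UNIV \<longleftrightarrow> b ^ (q ^ s) * u ^ (q ^ (2 * s)) + b * u = 0" for u
    by metis
  thus ?thesis by (auto simp: b_def)
qed

definition d where "d = gcd s n"
definition M where "M = N div (q ^ (2 * d) - 1)"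

lemma d_dval: "d = dval m n" by (simp add: d_def dval_def s_def)

lemma gcd_2s: "gcd (q ^ (2 * s) - 1) N = q ^ (2 * d) - 1"
proof -
  have "gcd (q ^ (2 * s) - 1) N = q ^ gcd (2 * s) (2 * n) - 1"
    unfolding N_def using q_ge2 by (intro gcd_pow_minus_one) auto
  also have "gcd (2 * s) (2 * n) = 2 * d" by (simp add: d_def gcd_mult_distrib_nat)
  finally show ?thesis .
qed

lemma card_rad:
  assumes l: "l \<in> Kset" "l \<noteq> 0"
  defines "cl \<equiv> - ((l * a) / (l * a) ^ (q ^ s))"
  shows "card (rad (Bl l) UNIV) = (if cl ^ M = 1 then q ^ (2 * d) else 1)"
proof -
  define b where "b = l * a"
  have b0: "b \<noteq> 0" using l a_nz by (simp add: b_def)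
  have cl_b: "cl = - (b / b ^ (q ^ s))" by (simp add: cl_def b_def)
  have e: "q ^ (2 * s) \<ge> 1" using qpow_pos by (simp add: Suc_le_eq)
  have split: "u ^ (q ^ (2 * s)) = u * u ^ (q ^ (2 * s) - 1)" for u :: 'a
  proof -
    obtain K where K: "q ^ (2 * s) = Suc K" using e by (metis Suc_diff_1 less_le_trans zero_less_one)
    show ?thesis unfolding K by simp
  qed
  have "rad (Bl l) UNIV = insert 0 {u. u \<noteq> 0 \<and> u ^ (q ^ (2 * s) - 1) = cl}"
  proof -
    have "b ^ (q ^ s) * u ^ (q ^ (2 * s)) + b * u = 0 \<longleftrightarrow> u = 0 \<or> u ^ (q ^ (2 * s) - 1) = cl" for u
    proof (cases "u = 0")
      case True thus ?thesis using qpow_pos[of "2 * s"] by simp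
    next
      case False
      have "b ^ (q ^ s) * u ^ (q ^ (2 * s)) + b * u = b ^ (q ^ s) * (u * u ^ (q ^ (2 * s) - 1)) + b * u"
        by (simp only: split)
      also have "\<dots> = u * (b ^ (q ^ s) * u ^ (q ^ (2 * s) - 1) + b)"
        by (simp add: algebra_simps)
      also have "\<dots> = 0 \<longleftrightarrow> b ^ (q ^ s) * u ^ (q ^ (2 * s) - 1) + b = 0" using False by simp
      also have "\<dots> \<longleftrightarrow> u ^ (q ^ (2 * s) - 1) = cl"
        unfolding cl_b using lin_solve[of "b ^ (q ^ s)"] b0 by simp
      finally show ?thesis using False by simp
    qed
    thus ?thesis using rad_Bl[OF l(1)] by (auto simp: b_def)
  qed
  moreover have "cl \<noteq> 0" using b0 by (simp add: cl_def b_def[symmetric])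
  ultimately have "card (rad (Bl l) UNIV) = 1 + (if cl ^ (N div gcd (q ^ (2 * s) - 1) N) = 1 then gcd (q ^ (2 * s) - 1) N else 0)"
    using root_count[of cl "q ^ (2 * s) - 1"] by simp
  also have "\<dots> = (if cl ^ M = 1 then q ^ (2 * d) else 1)"
    using gcd_2s qpow_pos[of "2 * d"] by (simp add: M_def)
  finally show ?thesis .
qed

end

lemma geom_nat: "(Q::nat) \<ge> 1 \<Longrightarrow> Q ^ t - 1 = (Q - 1) * (\<Sum>j<t. Q ^ j)"
proof -
  assume Q: "Q \<ge> 1"
  have "int (Q ^ t - 1) = int Q ^ t - 1" using Q by (simp add: of_nat_diff)
  also have "\<dots> = (int Q - 1) * (\<Sum>j<t. int Q ^ j)" by (rule power_diff_1_eq)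
  also have "\<dots> = int ((Q - 1) * (\<Sum>j<t. Q ^ j))" using Q by (simp add: of_nat_diff)
  finally show ?thesis using of_nat_eq_iff by blast
qed

context spec begin

definition t where "t = n div d"

lemma d_pos: "d > 0" using n_pos by (simp add: d_def)
lemma d_dvd_n: "d dvd n" by (simp add: d_def)
lemma n_dt: "n = d * t" using d_dvd_n by (simp add: t_def)
lemma t_pos: "t > 0" using n_dt n_pos by (metis gr0I mult_0_right)
lemma d_odd: "odd d"
proof -
  have "d dvd s" by (simp add: d_def)
  thus ?thesis by (metis dvd_trans even_mult_iff odd_one s_def dvd_add_right_iff dvd_triv_left)
qed
lemma d_le_n: "d \<le> n" using d_dvd_n n_pos by (simp add: dvd_imp_le)

lemma M_sum: "M = (\<Sum>j<t. q ^ (2 * d * j))"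
proof -
  have Q1: "q ^ (2 * d) \<ge> 1" using q_ge2 by (intro one_le_power) simp
  have Q2: "q ^ (2 * d) - 1 > 0"
  proof -
    have "q ^ (2 * d) > q ^ 0" using q_ge2 d_pos by (intro power_strict_increasing) auto
    thus ?thesis by simp
  qed
  have "q ^ (2 * n) = q ^ ((2 * d) * t)" using n_dt by (simp add: mult.assoc)
  hence "N = (q ^ (2 * d)) ^ t - 1" unfolding N_def by (simp add: power_mult)
  also have "\<dots> = (q ^ (2 * d) - 1) * (\<Sum>j<t. (q ^ (2 * d)) ^ j)" by (rule geom_nat[OF Q1])
  finally have "M = (\<Sum>j<t. (q ^ (2 * d)) ^ j)" using Q2 by (simp add: M_def)
  thus ?thesis by (simp add: power_mult)
qed

lemma K_pow_M: "z \<in> Kset \<Longrightarrow> z ^ M = z ^ t"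
proof -
  assume z: "z \<in> Kset"
  have "z ^ M = (\<Prod>j<t. z ^ (q ^ (2 * (d * j))))" unfolding M_sum by (simp add: power_sum mult.assoc)
  also have "\<dots> = (\<Prod>j<t. z)" using K_pow_even[OF z] by simp
  finally show ?thesis by simp
qed

lemma alpha_eq: "alpha q n m a = (- (a ^ (q ^ s - 1))) ^ M"
  by (simp add: alpha_def M_def N_def d_dval s_def)

definition deg :: "'a \<Rightarrow> bool" where "deg l \<longleftrightarrow> alpha q n m a * (l ^ (q - 1)) ^ t = 1"

lemma cl_cond:
  assumes l: "l \<in> Kset" "l \<noteq> 0"
  shows "(- ((l * a) / (l * a) ^ (q ^ s))) ^ M = 1 \<longleftrightarrow> deg l"
proof -
  have ls: "l ^ (q ^ s) = l ^ q" using K_pow_odd[OF l(1), of m] by (simp add: s_def)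
  have q1: "1 \<le> q" using q_ge2 by simp
  have qs1: "1 \<le> q ^ s" using q_ge2 by (intro one_le_power) simp
  have i: "inverse (- ((l * a) / (l * a) ^ (q ^ s))) = l ^ (q - 1) * (- (a ^ (q ^ s - 1)))"
  proof -
    have "inverse (- ((l * a) / (l * a) ^ (q ^ s))) = - ((l ^ q / l) * (a ^ (q ^ s) / a))"
      using l a_nz by (simp add: power_mult_distrib ls field_simps)
    also have "l ^ q / l = l ^ (q - 1)" using l q1 by (simp add: power_diff)
    also have "a ^ (q ^ s) / a = a ^ (q ^ s - 1)" using a_nz qs1 by (simp add: power_diff)
    finally show ?thesis by simp
  qed
  have "(- ((l * a) / (l * a) ^ (q ^ s))) ^ M = 1 \<longleftrightarrow> (inverse (- ((l * a) / (l * a) ^ (q ^ s)))) ^ M = 1"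
    by (simp only: power_inverse inverse_eq_1_iff)
  also have "\<dots> \<longleftrightarrow> (l ^ (q - 1)) ^ M * (- (a ^ (q ^ s - 1))) ^ M = 1" unfolding i by (simp only: power_mult_distrib)
  also have "(l ^ (q - 1)) ^ M = (l ^ (q - 1)) ^ t" using K_pow_M[OF K_pow[OF l(1)]] .
  finally show ?thesis by (simp add: deg_def alpha_eq mult.commute)
qed

lemma card_rad_deg:
  assumes l: "l \<in> Kset" "l \<noteq> 0"
  shows "card (rad (Bl l) UNIV) = (if deg l then q ^ (2 * d) else 1)"
  using card_rad[OF l] cl_cond[OF l] by simp

definition Zc :: "'a \<Rightarrow> nat" where "Zc l = card (level (Bl l) UNIV 0)"

lemma Z_formula:
  assumes l: "l \<in> Kset" "l \<noteq> 0"
  shows "int q * int (Zc l) = int q ^ (2 * n) +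
     (if deg l then (-1) ^ (n - d) * (int q - 1) * int q ^ (n + d) else (-1) ^ n * (int q - 1) * int q ^ n)"
proof -
  obtain r where r: "card (UNIV::'a set) = card (rad (Bl l) UNIV) * q ^ (2 * r)"
    "int q * int (Zc l) = int (card (UNIV::'a set)) + (-1) ^ r * (int q - 1) * int q ^ r * int (card (rad (Bl l) UNIV))"
    using herm_count[OF subsp_UNIV herm_Bl[OF l(1)]] unfolding Zc_def by blast
  have q1: "1 < q" using q_ge2 by simp
  show ?thesis
  proof (cases "deg l")
    case True
    hence "q ^ (2 * n) = q ^ (2 * d + 2 * r)" using r(1) card_rad_deg[OF l] cardF by (simp add: power_add)
    hence "2 * n = 2 * d + 2 * r" using q1 by (simp add: power_inject_exp)
    hence rr: "r = n - d" by simp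
    have e: "r + 2 * d = n + d" using rr d_le_n by simp
    have "int q ^ r * int (q ^ (2 * d)) = int q ^ (r + 2 * d)" by (simp add: power_add)
    hence "int q ^ r * int (q ^ (2 * d)) = int q ^ (n + d)" unfolding e .
    thus ?thesis using r(2) True card_rad_deg[OF l] cardF rr by (simp add: mult.assoc)
  next
    case False
    hence "q ^ (2 * n) = q ^ (2 * r)" using r(1) card_rad_deg[OF l] cardF by simp
    hence "r = n" using q1 by (simp add: power_inject_exp)
    thus ?thesis using r(2) False card_rad_deg[OF l] cardF by simp
  qed
qed

lemma E_formula:
  assumes l: "l \<in> Kset" "l \<noteq> 0" and u: "u \<in> Fq" "u \<noteq> 0"
  shows "int (q - 1) * int (card (level (Bl l) UNIV u)) = int q ^ (2 * n) - int (Zc l)"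
proof -
  have "q ^ (2 * n) = Zc l + (q - 1) * card (level (Bl l) UNIV u)"
    using level_sum[OF herm_Bl[OF l(1)] subsp_UNIV u] cardF by (simp add: Zc_def)
  hence "int (q ^ (2 * n)) = int (Zc l) + int (q - 1) * int (card (level (Bl l) UNIV u))"
    by (metis of_nat_add of_nat_mult)
  thus ?thesis by simp
qed

end

lemma sum_if_count:
  assumes "finite S"
  shows "(\<Sum>l\<in>S. (if P l then x else y)) = int (card {l\<in>S. P l}) * x + int (card S - card {l\<in>S. P l}) * (y::int)"
proof -
  have "(\<Sum>l\<in>S. (if P l then x else y)) = (\<Sum>l\<in>S \<inter> {l. P l}. x) + (\<Sum>l\<in>S \<inter> - {l. P l}. y)"
    by (rule sum.If_cases[OF assms])
  moreover have "S \<inter> {l. P l} = {l\<in>S. P l}" by auto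
  moreover have "S \<inter> - {l. P l} = S - {l\<in>S. P l}" by auto
  moreover have "card (S - {l\<in>S. P l}) = card S - card {l\<in>S. P l}"
    using assms by (intro card_Diff_subset) auto
  ultimately show ?thesis by (simp add: mult.commute)
qed

lemma mult_eq_1_inv: "(x::'a::field) \<noteq> 0 \<Longrightarrow> x * y = 1 \<longleftrightarrow> y = inverse x"
  by (auto simp: field_simps)

context spec begin

definition Kst where "Kst = Kset - {0}"

lemma card_Kst: "card Kst = q ^ 2 - 1"
  using card_K K_0 by (simp add: Kst_def card_Diff_singleton)

lemma q2_pos: "q ^ 2 - 1 > 0"
proof -
  have "q ^ 2 > q ^ 0" using q_ge2 by (intro power_strict_increasing) auto
  thus ?thesis by simp
qed

definition gK where "gK = gen ^ (N div (q ^ 2 - 1))"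

lemma gK_ord: "gK ^ i = 1 \<longleftrightarrow> (q ^ 2 - 1) dvd i"
proof -
  obtain M' where M': "N = (q ^ 2 - 1) * M'" using dvd_N[of 2] by (auto elim: dvdE)
  have q2: "q ^ 2 - 1 > 0" by (rule q2_pos)
  have M'0: "M' > 0" using M' N_pos by (metis gr0I mult_0_right less_irrefl)
  have "N div (q ^ 2 - 1) = M'" using M' q2 by simp
  hence "gK ^ i = 1 \<longleftrightarrow> N dvd M' * i" by (simp add: gK_def gen_ord flip: power_mult)
  also have "\<dots> \<longleftrightarrow> (q ^ 2 - 1) dvd i" using M' M'0 by (simp add: mult.commute)
  finally show ?thesis .
qed

lemma gK_image: "(\<lambda>j. gK ^ j) ` {..<q ^ 2 - 1} = Kst"
proof -
  have "gK \<noteq> 0" using cyc_nz[of gK "q^2-1"] gK_ord q2_pos by blast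
  have "(\<lambda>j. gK ^ j) ` {..<q ^ 2 - 1} \<subseteq> Kst"
  proof
    fix x assume "x \<in> (\<lambda>j. gK ^ j) ` {..<q ^ 2 - 1}"
    then obtain j where j: "x = gK ^ j" by auto
    have x0: "x \<noteq> 0" using j \<open>gK \<noteq> 0\<close> by simp
    have "x ^ (q ^ 2 - 1) = 1" using j gK_ord by (simp flip: power_mult)
    hence "x ^ (q ^ 2) = x" using pow_fix_iff[OF x0, of "q^2"] qpow_pos[of 2] by simp
    thus "x \<in> Kst" using x0 by (simp add: Kst_def Kset_def)
  qed
  moreover have "card ((\<lambda>j. gK ^ j) ` {..<q ^ 2 - 1}) = q ^ 2 - 1"
    using cyc_inj[of gK "q^2-1"] gK_ord q2_pos by (simp add: card_image)
  ultimately show ?thesis using card_Kst card_subset_eq[of Kst] by (simp add: Kst_def)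
qed

definition g where "g = gcd t (q + 1)"

lemma g_gval: "g = gval q n m" by (simp add: g_def gval_def t_def d_dval)

lemma alpha_nz: "alpha q n m a \<noteq> 0" using a_nz by (simp add: alpha_eq)

lemma D_count:
  "card {l\<in>Kst. deg l} = (if alpha q n m a ^ ((q + 1) div g) = 1 then (q - 1) * g else 0)"
proof -
  define al where "al = alpha q n m a"
  define P where "P = q ^ 2 - 1"
  define e where "e = (q - 1) * t"
  have al0: "al \<noteq> 0" using alpha_nz by (simp add: al_def)
  have degl: "deg l \<longleftrightarrow> l ^ e = inverse al" for l
  proof -
    have "l ^ e = (l ^ (q - 1)) ^ t" unfolding e_def by (rule power_mult)
    thus ?thesis using mult_eq_1_inv[OF al0] by (simp add: deg_def al_def)
  qed
  have P: "P = (q - 1) * (q + 1)" unfolding P_def by (rule qsq)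
  have gg: "gcd e P = (q - 1) * g" by (simp add: e_def P g_def gcd_mult_distrib_nat)
  have q1: "q - 1 > 0" using q_ge2 by simp
  have gpos: "g > 0" using g_def by simp
  have Pdiv: "P div gcd e P = (q + 1) div g"
  proof -
    obtain w where w: "q + 1 = g * w" using g_def by (metis dvd_def gcd_dvd2)
    have "P = (q - 1) * (g * w)" unfolding P w[symmetric] ..
    hence "P = ((q - 1) * g) * w" by (simp only: mult.assoc)
    thus ?thesis using gg w q1 gpos by simp
  qed
  have set: "{l\<in>Kst. deg l} = {x \<in> (\<lambda>j. gK ^ j) ` {..<P}. x ^ e = inverse al}"
    using gK_image degl by (auto simp: P_def)
  show ?thesis
  proof (cases "inverse al \<in> Kst")
    case True
    have "card {l\<in>Kst. deg l} = (if (inverse al) ^ (P div gcd e P) = 1 then gcd e P else 0)"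
      unfolding set by (rule cyc_count) (use gK_ord q2_pos True gK_image in \<open>auto simp: P_def\<close>)
    thus ?thesis using gg Pdiv by (simp add: al_def power_inverse)
  next
    case False
    have "{l\<in>Kst. deg l} = {}"
    proof (rule ccontr)
      assume "{l\<in>Kst. deg l} \<noteq> {}"
      then obtain l where l: "l \<in> Kst" "l ^ e = inverse al" using degl by auto
      hence "l ^ e \<in> Kset" using K_pow unfolding Kst_def by blast
      hence "inverse al \<in> Kst" using l(2) al0 unfolding Kst_def by simp
      thus False using False by simp
    qed
    moreover have "al ^ ((q + 1) div g) \<noteq> 1"
    proof
      assume h: "al ^ ((q + 1) div g) = 1"
      obtain w where w: "q + 1 = g * w" using g_def by (metis dvd_def gcd_dvd2)
      have "q ^ 2 - 1 = ((q + 1) div g) * (g * (q - 1))" using w gpos qsq by (simp add: mult_ac)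
      hence "al ^ (q ^ 2 - 1) = 1" using h by (simp add: power_mult)
      hence "al ^ (q ^ 2) = al" using pow_fix_iff[OF al0, of "q^2"] qpow_pos[of 2] by simp
      hence "inverse al \<in> Kst" using al0 K_inv by (simp add: Kst_def Kset_def)
      thus False using False by simp
    qed
    ultimately show ?thesis by (simp add: al_def)
  qed
qed

end

lemma sum_if_zero_card: "finite S \<Longrightarrow> (\<Sum>l\<in>S. (if P l then x else 0)) = of_nat (card {l\<in>S. P l}) * (x::int)"
  by (simp add: sum.inter_filter[symmetric])

lemma card_ind: "card {u::'b::finite. P u} = (\<Sum>u\<in>UNIV. (if P u then 1 else 0))"
  by (simp add: sum.inter_filter[symmetric])

lemma card_split2: "finite S \<Longrightarrow> card {l\<in>S. P l \<and> Q l} + card {l\<in>S. P l \<and> \<not> Q l} = card {l\<in>S. P l}"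
proof -
  assume S: "finite S"
  have "{l\<in>S. P l} = {l\<in>S. P l \<and> Q l} \<union> {l\<in>S. P l \<and> \<not> Q l}" by auto
  moreover have "{l\<in>S. P l \<and> Q l} \<inter> {l\<in>S. P l \<and> \<not> Q l} = {}" by auto
  ultimately show ?thesis using S by (simp add: card_Un_disjoint)
qed

context spec begin

lemma f_K: "f u \<in> Kset" by (simp add: f_def Tr_in_K)

definition G :: "'a \<Rightarrow> 'a \<Rightarrow> nat" where "G c l = card {u. T (l * (f u + c)) = 0}"

lemma T_zero: "T 0 = 0" using q_ge2 by (simp add: T_def)

lemma sum_G:
  assumes c: "c \<in> Kset"
  shows "(\<Sum>l\<in>Kst. G c l) = (q ^ 2 - 1) * card {u. f u + c = 0} + (q - 1) * card {u. f u + c \<noteq> 0}"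
proof -
  have "(\<Sum>l\<in>Kst. G c l) = (\<Sum>l\<in>Kst. \<Sum>u\<in>UNIV. (if T (l * (f u + c)) = 0 then 1 else 0))"
    unfolding G_def by (subst card_ind) (rule refl)
  also have "\<dots> = (\<Sum>u\<in>UNIV. \<Sum>l\<in>Kst. (if T (l * (f u + c)) = 0 then 1 else 0))" by (rule sum.swap)
  also have "\<dots> = (\<Sum>u\<in>UNIV. (if f u + c = 0 then q ^ 2 - 1 else q - 1))"
  proof (intro sum.cong refl)
    fix u
    have y: "f u + c \<in> Kset" using K_add[OF f_K c] .
    have "(\<Sum>l\<in>Kst. (if T (l * (f u + c)) = 0 then 1 else 0)) = card {l\<in>Kst. T (l * (f u + c)) = 0}"
      by (simp add: sum.inter_filter[symmetric])
    also have "\<dots> = (if f u + c = 0 then q ^ 2 - 1 else q - 1)"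
    proof (cases "f u + c = 0")
      case True thus ?thesis using card_Kst T_zero by simp
    next
      case False
      have "{l\<in>Kst. T (l * (f u + c)) = 0} = {l\<in>Kset. l \<noteq> 0 \<and> T (l * (f u + c)) = 0}" by (auto simp: Kst_def)
      thus ?thesis using T_kernel_count[OF y False] False by simp
    qed
    finally show "(\<Sum>l\<in>Kst. (if T (l * (f u + c)) = 0 then 1 else 0)) = (if f u + c = 0 then q ^ 2 - 1 else q - 1)" .
  qed
  also have "\<dots> = (\<Sum>u\<in>UNIV \<inter> {u. f u + c = 0}. q ^ 2 - 1) + (\<Sum>u\<in>UNIV \<inter> - {u. f u + c = 0}. q - 1)"
    by (rule sum.If_cases) simp
  also have "UNIV \<inter> - {u. f u + c = 0} = {u. f u + c \<noteq> 0}" by auto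
  also have "UNIV \<inter> {u. f u + c = 0} = {u. f u + c = 0}" by auto
  finally show ?thesis by (simp add: mult.commute)
qed

definition aval :: "'a \<Rightarrow> int" where
  "aval l = (if deg l then (-1) ^ (n - d) * int q ^ (n + d) else (-1) ^ n * int q ^ n)"

lemma G_formula:
  assumes l: "l \<in> Kst" and c: "c \<in> Kset"
  shows "int q * int (G c l) = int q ^ (2 * n) + (if T (l * c) = 0 then int q - 1 else -1) * aval l"
proof -
  have l': "l \<in> Kset" "l \<noteq> 0" using l by (auto simp: Kst_def)
  have lc: "l * c \<in> Kset" using K_mult[OF l'(1) c] .
  have eq: "{u. T (l * (f u + c)) = 0} = level (Bl l) UNIV (- T (l * c))"
  proof -
    have "T (l * (f u + c)) = Bl l u u + T (l * c)" for u by (simp add: Bl_diag distrib_left T_add)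
    hence "T (l * (f u + c)) = 0 \<longleftrightarrow> Bl l u u = - T (l * c)" for u
      by (simp add: eq_neg_iff_add_eq_0)
    thus ?thesis by (simp add: level_def)
  qed
  have Z: "int q * int (Zc l) = int q ^ (2 * n) + (int q - 1) * aval l"
    using Z_formula[OF l'] by (simp add: aval_def algebra_simps)
  show ?thesis
  proof (cases "T (l * c) = 0")
    case True
    hence "G c l = Zc l" using eq by (simp add: G_def Zc_def)
    thus ?thesis using Z True by simp
  next
    case False
    have u: "- T (l * c) \<in> Fq" "- T (l * c) \<noteq> 0" using T_in_Fq[OF lc] Fq_neg False by auto
    have E: "int (q - 1) * int (G c l) = int q ^ (2 * n) - int (Zc l)"
      using E_formula[OF l' u] eq by (simp add: G_def)
    have q1: "int (q - 1) = int q - 1" using q_ge2 by (simp add: of_nat_diff)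
    have "(int q - 1) * (int q * int (G c l)) = (int q - 1) * (int q ^ (2 * n) - aval l)"
    proof -
      have E': "(int q - 1) * int (G c l) = int q ^ (2 * n) - int (Zc l)" using E q1 by simp
      have "(int q - 1) * (int q * int (G c l)) = int q * ((int q - 1) * int (G c l))"
        by (simp add: algebra_simps)
      also have "\<dots> = int q * (int q ^ (2 * n) - int (Zc l))" by (simp only: E')
      also have "\<dots> = int q * int q ^ (2 * n) - (int q ^ (2 * n) + (int q - 1) * aval l)"
        using Z by (simp add: algebra_simps)
      finally show ?thesis by (simp add: algebra_simps)
    qed
    moreover have "int q - 1 \<noteq> 0" using q_ge2 by simp
    ultimately have "int q * int (G c l) = int q ^ (2 * n) - aval l" by simp
    thus ?thesis using False by simp
  qed
qed

end

context spec begin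

lemma T0_deg:
  assumes l: "l \<in> Kst" and c: "c \<in> Kset" "c \<noteq> 0" and T0: "T (l * c) = 0"
  shows "deg l \<longleftrightarrow> (- (c ^ (q - 1))) ^ t = alpha q n m a"
proof -
  have l': "l \<noteq> 0" using l by (simp add: Kst_def)
  have q1: "q = Suc (q - 1)" using q_ge2 by simp
  have "l * c + (l * c) * (l ^ (q - 1) * c ^ (q - 1)) = 0"
  proof -
    have "(l * c) ^ q = (l * c) * (l ^ (q - 1) * c ^ (q - 1))"
      by (subst q1) (simp add: power_mult_distrib mult_ac)
    thus ?thesis using T0 by (simp add: T_def)
  qed
  hence "(l * c) * (1 + l ^ (q - 1) * c ^ (q - 1)) = 0" by (simp add: algebra_simps)
  hence "1 + l ^ (q - 1) * c ^ (q - 1) = 0" using l' c by simp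
  hence lq: "l ^ (q - 1) = inverse (- (c ^ (q - 1)))" using c
    by (simp add: field_simps eq_neg_iff_add_eq_0 add.commute)
  have "deg l \<longleftrightarrow> alpha q n m a * inverse ((- (c ^ (q - 1))) ^ t) = 1"
    unfolding deg_def lq power_inverse ..
  also have "\<dots> \<longleftrightarrow> (- (c ^ (q - 1))) ^ t = alpha q n m a"
    using c by (auto simp: field_simps)
  finally show ?thesis .
qed

lemma T0_count:
  assumes c: "c \<in> Kset" "c \<noteq> 0"
  shows "card {l\<in>Kst. T (l * c) = 0} = q - 1"
proof -
  have "{l\<in>Kst. T (l * c) = 0} = {l\<in>Kset. l \<noteq> 0 \<and> T (l * c) = 0}" by (auto simp: Kst_def)
  thus ?thesis using T_kernel_count[OF c] by simp
qed

definition ad :: int where "ad = (-1) ^ (n - d) * int q ^ (n + d)"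
definition an :: int where "an = (-1) ^ n * int q ^ n"

lemma master:
  assumes c: "c \<in> Kset"
  defines "c1 \<equiv> card {l\<in>Kst. T (l * c) = 0 \<and> deg l}"
    and "c2 \<equiv> card {l\<in>Kst. T (l * c) = 0 \<and> \<not> deg l}"
    and "c3 \<equiv> card {l\<in>Kst. \<not> T (l * c) = 0 \<and> deg l}"
    and "c4 \<equiv> card {l\<in>Kst. \<not> T (l * c) = 0 \<and> \<not> deg l}"
    and "Nc \<equiv> card {u. f u + c = 0}"
  shows "int q ^ 2 * (int q - 1) * int Nc = (int q - 1) * int q ^ (2 * n) + (int q - 1) * (int c1 * ad + int c2 * an) - int c3 * ad - int c4 * an"
proof -
  define X where "X = int q ^ (2 * n)"
  have finK: "finite Kst" by simp
  have cardU: "card {u. f u + c = 0} + card {u. f u + c \<noteq> 0} = q ^ (2 * n)"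
    using card_split2[of UNIV "\<lambda>_. True" "\<lambda>u. f u + c = 0"] cardF by simp
  have q1: "int (q - 1) = int q - 1" "int (q ^ 2 - 1) = int q ^ 2 - 1" using q_ge2 qpow_pos[of 2]
    by (auto simp: of_nat_diff)
  have S1: "int q * int (\<Sum>l\<in>Kst. G c l) = (int q ^ 2 - 1) * X + ((int q - 1) * (int c1 * ad + int c2 * an) - int c3 * ad - int c4 * an)"
  proof -
    have "int q * int (\<Sum>l\<in>Kst. G c l) = (\<Sum>l\<in>Kst. int q * int (G c l))" by (simp add: sum_distrib_left)
    also have "\<dots> = (\<Sum>l\<in>Kst. X + (if T (l * c) = 0 then int q - 1 else -1) * aval l)"
      using G_formula c by (simp add: X_def)
    also have "\<dots> = (\<Sum>l\<in>Kst. X + ((((if T (l * c) = 0 \<and> deg l then (int q - 1) * ad else 0)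
        + (if T (l * c) = 0 \<and> \<not> deg l then (int q - 1) * an else 0))
        + (if \<not> T (l * c) = 0 \<and> deg l then - ad else 0))
        + (if \<not> T (l * c) = 0 \<and> \<not> deg l then - an else 0)))"
      by (intro sum.cong refl) (auto simp: aval_def ad_def an_def)
    also have "\<dots> = (\<Sum>l\<in>Kst. X) + ((((\<Sum>l\<in>Kst. (if T (l * c) = 0 \<and> deg l then (int q - 1) * ad else 0))
        + (\<Sum>l\<in>Kst. (if T (l * c) = 0 \<and> \<not> deg l then (int q - 1) * an else 0)))
        + (\<Sum>l\<in>Kst. (if \<not> T (l * c) = 0 \<and> deg l then - ad else 0)))
        + (\<Sum>l\<in>Kst. (if \<not> T (l * c) = 0 \<and> \<not> deg l then - an else 0)))"
      by (simp only: sum.distrib)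
    also have "\<dots> = (int q ^ 2 - 1) * X + ((int q - 1) * (int c1 * ad + int c2 * an) - int c3 * ad - int c4 * an)"
      unfolding sum_if_zero_card[OF finK] using card_Kst q1
      by (simp add: c1_def c2_def c3_def c4_def algebra_simps)
    finally show ?thesis .
  qed
  have S2: "int (\<Sum>l\<in>Kst. G c l) = (int q ^ 2 - 1) * int Nc + (int q - 1) * (X - int Nc)"
  proof -
    have "int (card {u. f u + c = 0}) + int (card {u. f u + c \<noteq> 0}) = int (q ^ (2 * n))"
      using cardU by (metis of_nat_add)
    hence "int (card {u. f u + c \<noteq> 0}) = X - int Nc" by (simp add: X_def Nc_def)
    thus ?thesis using sum_G[OF c] q1 by (simp add: Nc_def)
  qed
  have "int q ^ 2 * (int q - 1) * int Nc = int q * ((int q ^ 2 - 1) * int Nc + (int q - 1) * (X - int Nc)) - (int q ^ 2 - 1) * X + (int q - 1) * X"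
    by (simp add: algebra_simps power2_eq_square)
  also have "\<dots> = (int q - 1) * X + ((int q - 1) * (int c1 * ad + int c2 * an) - int c3 * ad - int c4 * an)"
    using S1 S2 by simp
  finally show ?thesis by (simp add: X_def)
qed

end

context spec begin

definition Qv :: int where "Qv = int q + 1 - int g * (int q ^ d + 1)"
definition cond where "cond \<longleftrightarrow> alpha q n m a ^ ((q + 1) div g) = 1"

lemma ad_eq: "ad = - ((-1) ^ n * int q ^ n * int q ^ d)"
proof -
  have "(-1::int) ^ n = (-1) ^ (n - d) * (-1) ^ d" using d_le_n by (simp flip: power_add)
  hence "(-1::int) ^ (n - d) = - ((-1) ^ n)" using d_odd by simp
  thus ?thesis by (simp add: ad_def power_add)
qed

lemma int_result:
  assumes c: "c \<in> Kset"
  defines "Nc \<equiv> int (card {u. f u + c = 0})"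
  defines "X \<equiv> int q ^ (2 * n)" and "A \<equiv> int q ^ n" and "Bd \<equiv> int q ^ d" and "\<sigma> \<equiv> (-1::int) ^ n"
  shows "int q ^ 2 * Nc = X + (if cond then
      (if c = 0 then \<sigma> * (int q - 1) * A * Qv
       else if (- (c ^ (q - 1))) ^ t = alpha q n m a then - \<sigma> * A * Bd * int q - \<sigma> * A * Qv
       else \<sigma> * A * int q - \<sigma> * A * Qv)
    else (if c = 0 then \<sigma> * (int q ^ 2 - 1) * A else - \<sigma> * A))"
proof -
  define c1 where "c1 = card {l\<in>Kst. T (l * c) = 0 \<and> deg l}"
  define c2 where "c2 = card {l\<in>Kst. T (l * c) = 0 \<and> \<not> deg l}"
  define c3 where "c3 = card {l\<in>Kst. \<not> T (l * c) = 0 \<and> deg l}"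
  define c4 where "c4 = card {l\<in>Kst. \<not> T (l * c) = 0 \<and> \<not> deg l}"
  define T0c where "T0c = card {l\<in>Kst. T (l * c) = 0}"
  define D where "D = card {l\<in>Kst. deg l}"
  have E: "int q ^ 2 * (int q - 1) * Nc = (int q - 1) * X + (int q - 1) * (int c1 * ad + int c2 * an) - int c3 * ad - int c4 * an"
    using master[OF c] by (simp add: c1_def c2_def c3_def c4_def Nc_def X_def)
  have finK: "finite Kst" by simp
  have R1: "c1 + c2 = T0c" unfolding c1_def c2_def T0c_def by (rule card_split2[OF finK])
  have R2: "c1 + c3 = D"
  proof -
    have "card {l\<in>Kst. deg l \<and> T (l * c) = 0} + card {l\<in>Kst. deg l \<and> \<not> T (l * c) = 0} = D"
      unfolding D_def by (rule card_split2[OF finK])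
    moreover have "{l\<in>Kst. deg l \<and> T (l * c) = 0} = {l\<in>Kst. T (l * c) = 0 \<and> deg l}" by auto
    moreover have "{l\<in>Kst. deg l \<and> \<not> T (l * c) = 0} = {l\<in>Kst. \<not> T (l * c) = 0 \<and> deg l}" by auto
    ultimately show ?thesis by (simp add: c1_def c3_def)
  qed
  have R3: "c3 + c4 + T0c = q ^ 2 - 1"
  proof -
    have "c3 + c4 = card {l\<in>Kst. \<not> T (l * c) = 0}" unfolding c3_def c4_def by (rule card_split2[OF finK])
    moreover have "card {l\<in>Kst. \<not> T (l * c) = 0} + T0c = card Kst"
      using card_split2[OF finK, of "\<lambda>_. True" "\<lambda>l. \<not> T (l * c) = 0"] unfolding T0c_def by simp
    ultimately show ?thesis using card_Kst by simp
  qed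
  have Dv: "D = (if cond then (q - 1) * g else 0)" using D_count by (simp add: D_def cond_def)
  have q1: "int (q - 1) = int q - 1" using q_ge2 by (simp add: of_nat_diff)
  have q21: "int (q ^ 2 - 1) = int q ^ 2 - 1" using qpow_pos[of 2] by (simp add: of_nat_diff)
  have qn1: "int q - 1 \<noteq> 0" using q_ge2 by simp
  have adv: "ad = - \<sigma> * A * Bd" using ad_eq by (simp add: \<sigma>_def A_def Bd_def)
  have anv: "an = \<sigma> * A" by (simp add: an_def \<sigma>_def A_def)
  have i2: "int c2 = int T0c - int c1" using R1 by simp
  have i3: "int c3 = int D - int c1" using R2 by simp
  have i4: "int c4 = (int q ^ 2 - 1) - int T0c - int D + int c1" using R3 R2 q21 by simp
  have Qvv: "Qv = int q + 1 - int g * (Bd + 1)" by (simp add: Qv_def Bd_def)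
  have E': "(int q - 1) * (int q ^ 2 * Nc) = (int q - 1) * X + (int q - 1) * (int c1 * ad + (int T0c - int c1) * an)
      - (int D - int c1) * ad - ((int q ^ 2 - 1) - int T0c - int D + int c1) * an"
    using E i2 i3 i4 by (simp add: mult_ac)
  show ?thesis
  proof (cases "c = 0")
    case True
    have T0: "T0c = q ^ 2 - 1" using card_Kst T_zero True by (simp add: T0c_def)
    have c1D: "c1 = D" using T_zero True by (simp add: c1_def D_def)
    show ?thesis
    proof (cases cond)
      case cd: True
      have Di: "int D = (int q - 1) * int g" using Dv cd q1 by simp
      have "(int q - 1) * (int q ^ 2 * Nc) = (int q - 1) * (X + \<sigma> * (int q - 1) * A * Qv)"
        using E' unfolding T0 c1D q21 Di adv anv Qvv by (simp add: algebra_simps power2_eq_square)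
      thus ?thesis using qn1 cd True by simp
    next
      case cd: False
      have Di: "int D = 0" using Dv cd by simp
      have "(int q - 1) * (int q ^ 2 * Nc) = (int q - 1) * (X + \<sigma> * (int q ^ 2 - 1) * A)"
        using E' unfolding T0 c1D q21 Di adv anv by (simp add: algebra_simps power2_eq_square)
      thus ?thesis using qn1 cd True by simp
    qed
  next
    case False
    have T0: "T0c = q - 1" using T0_count[OF c False] by (simp add: T0c_def)
    define cc where "cc \<longleftrightarrow> (- (c ^ (q - 1))) ^ t = alpha q n m a"
    have "{l\<in>Kst. T (l * c) = 0 \<and> deg l} = (if cc then {l\<in>Kst. T (l * c) = 0} else {})"
      using T0_deg[OF _ c False] by (auto simp: cc_def)
    hence c1v: "c1 = (if cc then q - 1 else 0)" using T0 by (simp add: c1_def T0c_def)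
    show ?thesis
    proof (cases cond)
      case cd: True
      have Di: "int D = (int q - 1) * int g" using Dv cd q1 by simp
      show ?thesis
      proof (cases cc)
        case True
        have c1i: "int c1 = int q - 1" using c1v True q1 by simp
        have "(int q - 1) * (int q ^ 2 * Nc) = (int q - 1) * (X + (- \<sigma> * A * Bd * int q - \<sigma> * A * Qv))"
          using E' unfolding T0 q1 c1i Di adv anv Qvv by (simp add: algebra_simps power2_eq_square)
        thus ?thesis using qn1 cd True \<open>c \<noteq> 0\<close> by (simp add: cc_def)
      next
        case ncc: False
        have c1i: "int c1 = 0" using c1v ncc by simp
        have "(int q - 1) * (int q ^ 2 * Nc) = (int q - 1) * (X + (\<sigma> * A * int q - \<sigma> * A * Qv))"
          using E' unfolding T0 q1 c1i Di adv anv Qvv by (simp add: algebra_simps power2_eq_square)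
        thus ?thesis using qn1 cd ncc \<open>c \<noteq> 0\<close> by (simp add: cc_def)
      qed
    next
      case cd: False
      have Di: "D = 0" using Dv cd by simp
      hence c1i: "int c1 = 0" using R2 by simp
      have "(int q - 1) * (int q ^ 2 * Nc) = (int q - 1) * (X - \<sigma> * A)"
        using E' unfolding T0 q1 c1i Di adv anv by (simp add: algebra_simps power2_eq_square)
      thus ?thesis using qn1 cd \<open>c \<noteq> 0\<close> by simp
    qed
  qed
qed

end

context spec begin

lemma g_pos: "g \<ge> 1" by (simp add: g_def Suc_le_eq)
lemma g_le: "g \<le> q + 1" by (simp add: g_def gcd_le2_nat)
lemma d_le_s: "d \<le> s" by (simp add: d_def gcd_le1_nat s_def)
lemma d_pos': "d \<ge> 1" using d_pos by simp

lemma Qv_abs: "\<bar>Qv\<bar> = int (q + 1) * int q ^ s \<longleftrightarrow> g = q + 1 \<and> d = s"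
proof -
  define B where "B = int q ^ d"
  define Bs where "Bs = int q ^ s"
  have q2: "int q \<ge> 2" using q_ge2 by simp
  have BBs: "B \<le> Bs" unfolding B_def Bs_def using d_le_s q2 by (intro power_increasing) auto
  have Bq: "B \<ge> int q" unfolding B_def using d_pos' q2 by (metis power_increasing power_one_right
        dual_order.trans one_le_numeral)
  have g1: "int g \<ge> 1" using g_pos by simp
  have g2: "int g \<le> int q + 1" using g_le by simp
  have "int g * (B + 1) \<ge> 1 * (B + 1)" using g1 Bq q2 by (intro mult_right_mono) auto
  hence gB: "int g * (B + 1) \<ge> B + 1" by simp
  have QvB: "Qv = int q + 1 - int g * (B + 1)" by (simp add: Qv_def B_def)
  have Qneg: "Qv \<le> 0" using QvB Bq gB by linarith
  hence absQ: "\<bar>Qv\<bar> = int g * (B + 1) - (int q + 1)" using QvB by simp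
  show ?thesis
  proof
    assume h: "\<bar>Qv\<bar> = int (q + 1) * int q ^ s"
    hence h': "int g * (B + 1) - (int q + 1) = (int q + 1) * Bs" using absQ by (simp add: Bs_def)
    have gq: "g = q + 1"
    proof (rule ccontr)
      assume "g \<noteq> q + 1"
      hence "int g \<le> int q" using g_le by simp
      hence "int g * (B + 1) \<le> int q * (B + 1)" using Bq q2 by (intro mult_right_mono) auto
      hence A1: "int g * (B + 1) \<le> int q * B + int q" by (simp add: algebra_simps)
      have "(int q + 1) * B \<le> (int q + 1) * Bs" using BBs q2 by (intro mult_left_mono) auto
      hence A2: "int q * B + B \<le> (int q + 1) * Bs" by (simp add: algebra_simps)
      have A3: "int g * (B + 1) = (int q + 1) * Bs + int q + 1" using h' by simp
      show False using A1 A2 A3 Bq q2 by linarith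
    qed
    hence "(int q + 1) * B = (int q + 1) * Bs" using h' by (simp add: algebra_simps)
    hence "B = Bs" using q2 by simp
    hence "q ^ d = q ^ s" unfolding B_def Bs_def by (metis of_nat_eq_iff of_nat_power)
    hence "d = s" using q_ge2 by (simp add: power_inject_exp)
    thus "g = q + 1 \<and> d = s" using gq by simp
  next
    assume "g = q + 1 \<and> d = s"
    thus "\<bar>Qv\<bar> = int (q + 1) * int q ^ s" using absQ by (simp add: B_def algebra_simps)
  qed
qed

lemma dvd_iff: "s * (q + 1) dvd n \<longleftrightarrow> d = s \<and> g = q + 1"
proof
  assume h: "s * (q + 1) dvd n"
  hence sn: "s dvd n" by (metis dvd_mult_left)
  hence ds: "d = s" by (simp add: d_def gcd_nat.absorb1)
  obtain w where w: "n = s * (q + 1) * w" using h by (auto elim: dvdE)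
  have s0: "s > 0" by (simp add: s_def)
  have t1: "t = n div s" using ds by (simp add: t_def)
  have nw: "n = s * ((q + 1) * w)" by (metis w mult.assoc)
  have "n div s = (q + 1) * w" using s0 by (subst nw) simp
  hence "t = (q + 1) * w" using t1 by simp
  hence "g = q + 1" unfolding g_def by (metis gcd_nat.absorb2 dvd_triv_left)
  thus "d = s \<and> g = q + 1" using ds by simp
next
  assume h: "d = s \<and> g = q + 1"
  have "(q + 1) dvd t" using h by (metis g_def gcd_dvd1)
  then obtain w where "t = (q + 1) * w" by (auto elim: dvdE)
  hence "n = s * (q + 1) * w" using n_dt h by (simp add: algebra_simps)
  thus "s * (q + 1) dvd n" by simp
qed

end

theorem proposition4p4:
  fixes q n m :: nat and a :: "'a::{finite,field}"
  assumes q_pp: "\<exists>p k. prime p \<and> k > 0 \<and> q = p ^ k"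
    and card_F: "card (UNIV :: 'a set) = q ^ (2 * n)"
    and n_pos: "n > 0"
    and m_le: "m \<le> n - 1"
    and a_nz: "a \<noteq> 0"
  shows
    "(\<forall>c::'a. c ^ (q ^ 2) = c \<longrightarrow>
       (alpha q n m a ^ ((q + 1) div gval q n m) = 1 \<longrightarrow>
         real (Ncount q n m a c) - real q ^ (2 * (n - 1)) =
           (if c = 0 then (-1) ^ n * (real q - 1) * real q powi (int n - 2) * Qval q n m
            else if (- (c ^ (q - 1))) ^ (n div dval m n) = alpha q n m a
            then (-1) ^ (n - 1) * real q ^ (n + dval m n - 1) + (-1) ^ (n - 1) * real q powi (int n - 2) * Qval q n m
            else (-1) ^ n * real q ^ (n - 1) + (-1) ^ (n - 1) * real q powi (int n - 2) * Qval q n m))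
       \<and> (alpha q n m a ^ ((q + 1) div gval q n m) \<noteq> 1 \<longrightarrow>
         real (Ncount q n m a c) - real q ^ (2 * (n - 1)) =
           (if c = 0 then (-1) ^ n * (real q ^ 2 - 1) * real q powi (int n - 2)
            else (-1) ^ (n - 1) * real q powi (int n - 2))))
     \<and> (\<bar>real (Ncount q n m a 0) - real q ^ (2 * (n - 1))\<bar> = (real q ^ 2 - 1) * real q ^ (n + 2 * m - 1)
          \<longleftrightarrow> ((2 * m + 1) * (q + 1) dvd n \<and> alpha q n m a = 1))"
proof -
  obtain p k where pk: "prime p" "k > 0" "q = p ^ k" using q_pp by blast
  interpret S: spec q n p k "TYPE('a)" a m
    by unfold_locales (use pk card_F n_pos m_le a_nz in auto)
  have dd: "dval m n = S.d" by (simp add: S.d_dval)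
  have gg: "gval q n m = S.g" by (simp add: S.g_gval)
  have tt: "n div dval m n = S.t" by (simp add: S.t_def dd)
  have tt': "n div S.d = S.t" by (simp add: S.t_def)
  have QQ: "Qval q n m = real_of_int S.Qv" by (simp add: Qval_def S.Qv_def gg dd)
  have cc: "alpha q n m a ^ ((q + 1) div gval q n m) = 1 \<longleftrightarrow> S.cond" by (simp add: S.cond_def gg)
  have Nc: "Ncount q n m a c = card {u. S.f u + c = 0}" for c by (simp add: Ncount_def S.f_def)
  have q0: "real q \<noteq> 0" using S.q_ge2 by simp
  have pw: "real q powi (int n - 2) = real q ^ n / real q ^ 2"
    using q0 by (simp add: power_int_diff)
  have X2: "real q ^ (2 * (n - 1)) = real q ^ (2 * n) / real q ^ 2"
  proof -
    have ee: "2 * (n - 1) + 2 = 2 * n" using n_pos by simp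
    have "real q ^ (2 * (n - 1)) * real q ^ 2 = real q ^ (2 * n)" by (metis power_add ee)
    thus ?thesis using q0 by (simp add: field_simps)
  qed
  have sg: "(-1::real) ^ (n - 1) = - ((-1) ^ n)"
  proof -
    obtain n' where "n = Suc n'" using n_pos gr0_implies_Suc by blast
    thus ?thesis by simp
  qed
  define R :: "'a \<Rightarrow> int" where "R c = (if S.cond then
      (if c = 0 then (-1) ^ n * (int q - 1) * int q ^ n * S.Qv
       else if (- (c ^ (q - 1))) ^ S.t = alpha q n m a then - ((-1) ^ n) * int q ^ n * int q ^ S.d * int q - (-1) ^ n * int q ^ n * S.Qv
       else (-1) ^ n * int q ^ n * int q - (-1) ^ n * int q ^ n * S.Qv)
    else (if c = 0 then (-1) ^ n * (int q ^ 2 - 1) * int q ^ n else - ((-1) ^ n) * int q ^ n))" for c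
  have key: "real (Ncount q n m a c) - real q ^ (2 * (n - 1)) = real_of_int (R c) / real q ^ 2"
    if c: "c \<in> S.Kset" for c
  proof -
    have "int q ^ 2 * int (card {u. S.f u + c = 0}) = int q ^ (2 * n) + R c"
      using S.int_result[OF c] by (simp add: R_def)
    hence "real_of_int (int q ^ 2 * int (card {u. S.f u + c = 0})) = real_of_int (int q ^ (2 * n) + R c)"
      by (rule arg_cong)
    hence "real q ^ 2 * real (Ncount q n m a c) = real q ^ (2 * n) + real_of_int (R c)"
      unfolding Nc by simp
    thus ?thesis unfolding X2 using q0 by (simp add: field_simps)
  qed
  have part1: "\<forall>c::'a. c ^ (q ^ 2) = c \<longrightarrow>
       (alpha q n m a ^ ((q + 1) div gval q n m) = 1 \<longrightarrow>
         real (Ncount q n m a c) - real q ^ (2 * (n - 1)) =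
           (if c = 0 then (-1) ^ n * (real q - 1) * real q powi (int n - 2) * Qval q n m
            else if (- (c ^ (q - 1))) ^ (n div dval m n) = alpha q n m a
            then (-1) ^ (n - 1) * real q ^ (n + dval m n - 1) + (-1) ^ (n - 1) * real q powi (int n - 2) * Qval q n m
            else (-1) ^ n * real q ^ (n - 1) + (-1) ^ (n - 1) * real q powi (int n - 2) * Qval q n m))
       \<and> (alpha q n m a ^ ((q + 1) div gval q n m) \<noteq> 1 \<longrightarrow>
         real (Ncount q n m a c) - real q ^ (2 * (n - 1)) =
           (if c = 0 then (-1) ^ n * (real q ^ 2 - 1) * real q powi (int n - 2)
            else (-1) ^ (n - 1) * real q powi (int n - 2)))"
  proof (intro allI impI conjI)
    fix c :: 'a assume "c ^ (q ^ 2) = c"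
    hence c: "c \<in> S.Kset" by (simp add: S.Kset_def)
    have e1: "real q ^ (n + S.d - 1) = real q ^ n * real q ^ S.d * real q / real q ^ 2"
    proof -
      have ee: "n + S.d - 1 + 2 = n + S.d + 1" using n_pos by simp
      have "real q ^ (n + S.d - 1) * real q ^ 2 = real q ^ (n + S.d + 1)" by (metis power_add ee)
      also have "\<dots> = real q ^ n * real q ^ S.d * real q" by (simp add: power_add)
      finally have "real q ^ (n + S.d - 1) * real q ^ 2 = real q ^ n * real q ^ S.d * real q" .
      thus ?thesis using q0 by (simp add: field_simps)
    qed
    have e2: "real q ^ (n - 1) = real q ^ n * real q / real q ^ 2"
    proof -
      have ee: "n - 1 + 2 = n + 1" using n_pos by simp
      have "real q ^ (n - 1) * real q ^ 2 = real q ^ (n + 1)" by (metis power_add ee)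
      hence "real q ^ (n - 1) * real q ^ 2 = real q ^ n * real q" by simp
      thus ?thesis using q0 by (simp add: field_simps)
    qed
    {
      assume "alpha q n m a ^ ((q + 1) div gval q n m) = 1"
      hence cd: S.cond using cc by simp
      show "real (Ncount q n m a c) - real q ^ (2 * (n - 1)) =
           (if c = 0 then (-1) ^ n * (real q - 1) * real q powi (int n - 2) * Qval q n m
            else if (- (c ^ (q - 1))) ^ (n div dval m n) = alpha q n m a
            then (-1) ^ (n - 1) * real q ^ (n + dval m n - 1) + (-1) ^ (n - 1) * real q powi (int n - 2) * Qval q n m
            else (-1) ^ n * real q ^ (n - 1) + (-1) ^ (n - 1) * real q powi (int n - 2) * Qval q n m)"
        unfolding key[OF c] R_def tt dd tt' QQ pw sg e1 e2 using cd q0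
        by (simp add: field_simps)
    }
    {
      assume "alpha q n m a ^ ((q + 1) div gval q n m) \<noteq> 1"
      hence cd: "\<not> S.cond" using cc by simp
      show "real (Ncount q n m a c) - real q ^ (2 * (n - 1)) =
           (if c = 0 then (-1) ^ n * (real q ^ 2 - 1) * real q powi (int n - 2)
            else (-1) ^ (n - 1) * real q powi (int n - 2))"
        unfolding key[OF c] R_def pw sg using cd q0
        by (simp add: field_simps)
    }
  qed
  have part2: "\<bar>real (Ncount q n m a 0) - real q ^ (2 * (n - 1))\<bar> = (real q ^ 2 - 1) * real q ^ (n + 2 * m - 1)
          \<longleftrightarrow> ((2 * m + 1) * (q + 1) dvd n \<and> alpha q n m a = 1)"
  proof -
    have k0: "real (Ncount q n m a 0) - real q ^ (2 * (n - 1)) = real_of_int (R 0) / real q ^ 2"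
      using key[OF S.K_0] .
    have e3: "real q ^ (n + 2 * m - 1) = real q ^ (n + S.s) / real q ^ 2"
    proof -
      have ee: "n + 2 * m - 1 + 2 = n + S.s" using n_pos by (simp add: S.s_def)
      have "real q ^ (n + 2 * m - 1) * real q ^ 2 = real q ^ (n + S.s)" by (metis power_add ee)
      thus ?thesis using q0 by (simp add: field_simps)
    qed
    have q2p: "real q ^ 2 > 0" using q0 by simp
    have "\<bar>real (Ncount q n m a 0) - real q ^ (2 * (n - 1))\<bar> = (real q ^ 2 - 1) * real q ^ (n + 2 * m - 1)
        \<longleftrightarrow> \<bar>real_of_int (R 0)\<bar> / real q ^ 2 = (real q ^ 2 - 1) * real q ^ (n + S.s) / real q ^ 2"
      unfolding k0 e3 by (simp add: abs_divide)
    also have "\<dots> \<longleftrightarrow> \<bar>R 0\<bar> = (int q ^ 2 - 1) * int q ^ (n + S.s)"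
    proof -
      have "\<bar>real_of_int (R 0)\<bar> / real q ^ 2 = (real q ^ 2 - 1) * real q ^ (n + S.s) / real q ^ 2
          \<longleftrightarrow> \<bar>real_of_int (R 0)\<bar> = (real q ^ 2 - 1) * real q ^ (n + S.s)"
        using q2p by (simp add: divide_cancel_right)
      also have "\<dots> \<longleftrightarrow> real_of_int \<bar>R 0\<bar> = real_of_int ((int q ^ 2 - 1) * int q ^ (n + S.s))" by simp
      finally show ?thesis by (simp only: of_int_eq_iff)
    qed
    also have "\<dots> \<longleftrightarrow> S.cond \<and> S.g = q + 1 \<and> S.d = S.s"
    proof (cases S.cond)
      case True
      have F1: "\<bar>R 0\<bar> = (int q - 1) * int q ^ n * \<bar>S.Qv\<bar>"
        using True S.q_ge2 by (simp add: R_def abs_mult)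
      have F2: "(int q ^ 2 - 1) * int q ^ (n + S.s) = (int q - 1) * int q ^ n * (int (q + 1) * int q ^ S.s)"
        by (simp add: power_add power2_eq_square algebra_simps)
      have F3: "(int q - 1) * int q ^ n \<noteq> 0" using S.q_ge2 by simp
      have "\<bar>R 0\<bar> = (int q ^ 2 - 1) * int q ^ (n + S.s) \<longleftrightarrow>
          (int q - 1) * int q ^ n * \<bar>S.Qv\<bar> = (int q - 1) * int q ^ n * (int (q + 1) * int q ^ S.s)"
        by (simp only: F1 F2)
      also have "\<dots> \<longleftrightarrow> \<bar>S.Qv\<bar> = int (q + 1) * int q ^ S.s"
        by (rule mult_left_cancel[OF F3])
      finally have "\<bar>R 0\<bar> = (int q ^ 2 - 1) * int q ^ (n + S.s) \<longleftrightarrow> \<bar>S.Qv\<bar> = int (q + 1) * int q ^ S.s" .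
      thus ?thesis using S.Qv_abs True by simp
    next
      case False
      have "\<bar>R 0\<bar> = (int q ^ 2 - 1) * int q ^ n"
        using False S.q_ge2 by (simp add: R_def abs_mult power2_eq_square)
      moreover have "int q ^ n < int q ^ (n + S.s)" using S.q_ge2 by (intro power_strict_increasing) (auto simp: S.s_def)
      moreover have "int q ^ 2 - 1 > 0"
      proof -
        have "(2::int) ^ 2 \<le> int q ^ 2" using S.q_ge2 by (intro power_mono) auto
        thus ?thesis by simp
      qed
      ultimately have "(int q ^ 2 - 1) * int q ^ n < (int q ^ 2 - 1) * int q ^ (n + S.s)"
        by (intro mult_strict_left_mono)
      hence "\<bar>R 0\<bar> \<noteq> (int q ^ 2 - 1) * int q ^ (n + S.s)" using \<open>\<bar>R 0\<bar> = (int q ^ 2 - 1) * int q ^ n\<close> by linarith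
      thus ?thesis using False by simp
    qed
    also have "\<dots> \<longleftrightarrow> ((2 * m + 1) * (q + 1) dvd n \<and> alpha q n m a = 1)"
    proof -
      have "S.cond \<and> S.g = q + 1 \<longleftrightarrow> alpha q n m a = 1 \<and> S.g = q + 1" by (auto simp: S.cond_def)
      thus ?thesis using S.dvd_iff by (auto simp: S.s_def)
    qed
    finally show ?thesis .
  qed
  show ?thesis using part1 part2 by blast
qed


end
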